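(* Let $L$ be a standard Levi subgroup of $\mathrm{GL}_n(\mathbb{F}_q)$ and $L'=L\cap\mathrm{SL}_n(\mathbb{F}_q)$. Let $Z(L)$, $Z(L')$ be the centres of $L$ and $L'$. Then there is an isomorphism of $W(k)[L']$-modules $$\mathrm{res}_{L'}^L\mathcal Y_L\cong\bigoplus^{|Z(L):Z(L')|}\ \bigoplus_{[\mu]}\mathcal Y_{L',\mu},$$ where $[\mu]$ runs over the $T'$-orbits in $O_U(L')$ (for one representative $\mu$ of each orbit), and the outer sum denotes $|Z(L):Z(L')|$ copies.
   Context: $q$ a power of a prime $p$; $k$ algebraically closed of characteristic $\ell\neq p$; $W(k)$ its ring of Witt vectors. Standard Levi subgroups of $\mathrm{GL}_n(\mathbb{F}_q)$ are block-diagonal. $U$ denotes the group of upper unitriangular matrices in $L$ (it lies in $L'$). $T$ is the diagonal torus of $L$ and $T'=T\cap L'$; $T'$ acts on characters of $U$ by conjugation. $O_U(L')$ is the set of non-degenerate characters $\mu:U\to W(k)^\times$ (trivial on $[U,U]$, nontrivial on each simple root subgroup). For such $\mu$, $W(k)_\mu$ is $W(k)$ with $U$ acting via $\mu$; $\mathcal Y_{L',\mu}=\mathrm{ind}_U^{L'}W(k)_\mu$ and $\mathcal Y_L=\mathrm{ind}_U^LW(k)_\mu$ (the latter independent of $\mu$ up to isomorphism, the Gelfand–Graev $W(k)$-lattice of $L$). *)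

theory Defs
  imports "Jordan_Normal_Form.Determinant" "HOL-Computational_Algebra.Primes"
begin

text \<open>Block index of row/column i for the composition ns of n (blocks numbered from 0).\<close>
definition blk :: "nat list \<Rightarrow> nat \<Rightarrow> nat" where
  "blk ns i = card {k. k < length ns \<and> sum_list (take (Suc k) ns) \<le> i}"

definition Levi :: "nat list \<Rightarrow> nat \<Rightarrow> 'f::field mat set" where
  "Levi ns n = {A \<in> carrier_mat n n. det A \<noteq> 0 \<and>
      (\<forall>i<n. \<forall>j<n. blk ns i \<noteq> blk ns j \<longrightarrow> A $$ (i,j) = 0)}"

definition Levi' :: "nat list \<Rightarrow> nat \<Rightarrow> 'f::field mat set" where
  "Levi' ns n = {A \<in> Levi ns n. det A = 1}"

definition Uni :: "nat list \<Rightarrow> nat \<Rightarrow> 'f::field mat set" where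
  "Uni ns n = {A \<in> Levi ns n. (\<forall>i<n. A $$ (i,i) = 1) \<and> (\<forall>i<n. \<forall>j<n. j < i \<longrightarrow> A $$ (i,j) = 0)}"

definition Tor :: "nat list \<Rightarrow> nat \<Rightarrow> 'f::field mat set" where
  "Tor ns n = {A \<in> Levi ns n. \<forall>i<n. \<forall>j<n. i \<noteq> j \<longrightarrow> A $$ (i,j) = 0}"

definition Tor' :: "nat list \<Rightarrow> nat \<Rightarrow> 'f::field mat set" where
  "Tor' ns n = Tor ns n \<inter> Levi' ns n"

definition centre :: "'f::field mat set \<Rightarrow> 'f mat set" where
  "centre H = {z \<in> H. \<forall>g\<in>H. z * g = g * z}"

definition rootmat :: "nat \<Rightarrow> nat \<Rightarrow> 'f::field \<Rightarrow> 'f mat" where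
  "rootmat n i a = mat n n (\<lambda>(r,c). if r = c then 1 else if r = i \<and> c = Suc i then a else 0)"

text \<open>O_U(L'): group homomorphisms U \<rightarrow> W^\<times> (these are automatically trivial on [U,U],
  as W is commutative) that are nontrivial on every simple root subgroup of L
  (simple roots (i,i+1) with i, i+1 in the same block).\<close>
definition nondeg_chars :: "nat list \<Rightarrow> nat \<Rightarrow> ('f::field mat \<Rightarrow> 'w::idom) set" where
  "nondeg_chars ns n = {\<mu>.
      (\<forall>u\<in>Uni ns n. \<mu> u dvd 1) \<and>
      (\<forall>u\<in>Uni ns n. \<forall>v\<in>Uni ns n. \<mu> (u * v) = \<mu> u * \<mu> v) \<and>
      (\<forall>i. Suc i < n \<and> blk ns i = blk ns (Suc i) \<longrightarrow> (\<exists>a. \<mu> (rootmat n i a) \<noteq> 1))}"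

definition same_orbit :: "nat list \<Rightarrow> nat \<Rightarrow> ('f::field mat \<Rightarrow> 'w) \<Rightarrow> ('f mat \<Rightarrow> 'w) \<Rightarrow> bool" where
  "same_orbit ns n \<mu> \<nu> \<longleftrightarrow> (\<exists>t\<in>Tor' ns n. \<exists>t'\<in>Tor' ns n. t' * t = 1\<^sub>m n \<and>
      (\<forall>u\<in>Uni ns n. \<nu> u = \<mu> (t' * u * t)))"

definition orbit_reps :: "nat list \<Rightarrow> nat \<Rightarrow> ('f::field mat \<Rightarrow> 'w::idom) set \<Rightarrow> bool" where
  "orbit_reps ns n Reps \<longleftrightarrow> Reps \<subseteq> nondeg_chars ns n \<and>
     (\<forall>\<mu>\<in>nondeg_chars ns n. \<exists>\<nu>\<in>Reps. same_orbit ns n \<mu> \<nu>) \<and>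
     (\<forall>\<nu>1\<in>Reps. \<forall>\<nu>2\<in>Reps. same_orbit ns n \<nu>1 \<nu>2 \<longrightarrow> \<nu>1 = \<nu>2)"

definition ind_mod :: "'f::field mat set \<Rightarrow> 'f mat set \<Rightarrow> ('f mat \<Rightarrow> 'w::idom) \<Rightarrow> ('f mat \<Rightarrow> 'w) set" where
  "ind_mod H U \<mu> = {f. (\<forall>h\<in>H. \<forall>u\<in>U. f (u * h) = \<mu> u * f h) \<and> (\<forall>x. x \<notin> H \<longrightarrow> f x = 0)}"

definition ract :: "'f::field mat \<Rightarrow> ('f mat \<Rightarrow> 'w) \<Rightarrow> ('f mat \<Rightarrow> 'w)" where
  "ract g f = (\<lambda>h. f (h * g))"

text \<open>Direct sum of m copies of the sum over Reps of Y_{L',\<nu>}; components indexed by (j,\<nu>).\<close>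
definition dsum_mod :: "nat list \<Rightarrow> nat \<Rightarrow> nat \<Rightarrow> ('f::field mat \<Rightarrow> 'w::idom) set
     \<Rightarrow> (nat \<times> ('f mat \<Rightarrow> 'w) \<Rightarrow> 'f mat \<Rightarrow> 'w) set" where
  "dsum_mod ns n m Reps = {F.
      (\<forall>j \<nu>. j < m \<and> \<nu> \<in> Reps \<longrightarrow> F (j,\<nu>) \<in> ind_mod (Levi' ns n) (Uni ns n) \<nu>) \<and>
      (\<forall>j \<nu>. \<not> (j < m \<and> \<nu> \<in> Reps) \<longrightarrow> F (j,\<nu>) = (\<lambda>_. 0))}"

definition gmod_iso :: "'f::field mat set \<Rightarrow> ('f mat \<Rightarrow> 'w::idom) set
     \<Rightarrow> ('i \<Rightarrow> 'f mat \<Rightarrow> 'w) set \<Rightarrow> (('f mat \<Rightarrow> 'w) \<Rightarrow> ('i \<Rightarrow> 'f mat \<Rightarrow> 'w)) \<Rightarrow> bool" where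
  "gmod_iso G M N \<Phi> \<longleftrightarrow> bij_betw \<Phi> M N \<and>
     (\<forall>a. \<forall>f\<in>M. \<forall>g\<in>M. \<Phi> (\<lambda>x. a * f x + g x) = (\<lambda>i x. a * \<Phi> f i x + \<Phi> g i x)) \<and>
     (\<forall>s\<in>G. \<forall>f\<in>M. \<Phi> (ract s f) = (\<lambda>i. ract s (\<Phi> f i)))"

text \<open>'w is (up to isomorphism) the ring of Witt vectors W(k) of an algebraically closed
  field k of characteristic l: a complete discrete valuation ring with uniformizer l
  (hence absolutely unramified of characteristic 0) whose residue field W/lW = k is
  algebraically closed.\<close>
definition witt_alg_closed :: "nat \<Rightarrow> 'w::idom itself \<Rightarrow> bool" where
  "witt_alg_closed l _ \<longleftrightarrow> prime l \<and> (of_nat l :: 'w) \<noteq> 0 \<and> \<not> (of_nat l :: 'w) dvd 1 \<and>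
     (\<forall>x::'w. x \<noteq> 0 \<longrightarrow> (\<exists>u m. u dvd 1 \<and> x = u * of_nat l ^ m)) \<and>
     (\<forall>x::'w. (\<forall>m. (of_nat l :: 'w) ^ m dvd x) \<longrightarrow> x = 0) \<and>
     (\<forall>s::nat \<Rightarrow> 'w. (\<forall>m. (of_nat l :: 'w) ^ m dvd (s (Suc m) - s m)) \<longrightarrow>
         (\<exists>x. \<forall>m. (of_nat l :: 'w) ^ m dvd (x - s m))) \<and>
     (\<forall>d::nat. d \<ge> 1 \<longrightarrow> (\<forall>c::nat \<Rightarrow> 'w. \<exists>x. (of_nat l :: 'w) dvd (x ^ d + (\<Sum>i<d. c i * x ^ i))))"

end

theory Submission
  imports Defs
begin


lemma blk_mono: "i \<le> j \<Longrightarrow> blk ns i \<le> blk ns j"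
  unfolding blk_def by (rule card_mono) auto

lemma blk_between: "i \<le> k \<Longrightarrow> k \<le> j \<Longrightarrow> blk ns i = blk ns j \<Longrightarrow> blk ns k = blk ns i"
  using blk_mono[of i k ns] blk_mono[of k j ns] by simp

definition dmat :: "nat \<Rightarrow> (nat \<Rightarrow> 'a) \<Rightarrow> 'a::field mat" where
  "dmat n d = mat n n (\<lambda>(i,j). if i = j then d i else 0)"

definition Xm :: "nat \<Rightarrow> nat \<Rightarrow> nat \<Rightarrow> 'a \<Rightarrow> 'a::field mat" where
  "Xm n i j b = mat n n (\<lambda>(r,c). if r = c then 1 else if r = i \<and> c = j then b else 0)"

lemma rootmat_Xm: "rootmat n i a = Xm n i (Suc i) a"
  unfolding rootmat_def Xm_def by simp

lemma dmat_carrier[simp]: "dmat n d \<in> carrier_mat n n" and dim_dmat[simp]: "dim_row (dmat n d) = n" "dim_col (dmat n d) = n"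
  by (auto simp: dmat_def)

lemma Xm_carrier[simp]: "Xm n i j b \<in> carrier_mat n n" and dim_Xm[simp]: "dim_row (Xm n i j b) = n" "dim_col (Xm n i j b) = n"
  by (auto simp: Xm_def)

lemma dmat_index[simp]: "i < n \<Longrightarrow> j < n \<Longrightarrow> dmat n d $$ (i,j) = (if i = j then d i else 0)"
  by (simp add: dmat_def)

lemma Xm_index[simp]: "r < n \<Longrightarrow> c < n \<Longrightarrow> Xm n i j b $$ (r,c) = (if r = c then 1 else if r = i \<and> c = j then b else 0)"
  by (simp add: Xm_def)

lemma dmat_mult_index:
  assumes "A \<in> carrier_mat n m" "i < n" "j < m"
  shows "(dmat n d * A) $$ (i,j) = d i * A $$ (i,j)"
proof -
  have "(dmat n d * A) $$ (i,j) = (\<Sum>l\<in>{0..<n}. (if i = l then d i else 0) * A $$ (l,j))"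
    using assms by (simp add: scalar_prod_def)
  also have "\<dots> = (\<Sum>l\<in>{0..<n}. if l = i then d i * A $$ (i,j) else 0)"
    by (rule sum.cong) auto
  also have "\<dots> = d i * A $$ (i,j)" using assms by simp
  finally show ?thesis .
qed

lemma mult_dmat_index:
  assumes "A \<in> carrier_mat m n" "i < m" "j < n"
  shows "(A * dmat n d) $$ (i,j) = A $$ (i,j) * d j"
proof -
  have "(A * dmat n d) $$ (i,j) = (\<Sum>l\<in>{0..<n}. A $$ (i,l) * (if l = j then d l else 0))"
    using assms by (simp add: scalar_prod_def)
  also have "\<dots> = (\<Sum>l\<in>{0..<n}. if l = j then A $$ (i,j) * d j else 0)"
    by (rule sum.cong) auto
  also have "\<dots> = A $$ (i,j) * d j" using assms by simp
  finally show ?thesis .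
qed

lemma Xm_mult_index:
  assumes "A \<in> carrier_mat n m" "r < n" "c < m" "i \<noteq> j" "j < n"
  shows "(Xm n i j b * A) $$ (r,c) = A $$ (r,c) + (if r = i then b * A $$ (j,c) else 0)"
proof -
  have "(Xm n i j b * A) $$ (r,c) = (\<Sum>l\<in>{0..<n}. (if r = l then 1 else if r = i \<and> l = j then b else 0) * A $$ (l,c))"
    using assms by (simp add: scalar_prod_def)
  also have "\<dots> = (\<Sum>l\<in>{0..<n}. (if l = r then A $$ (r,c) else 0) + (if l = j then (if r = i then b * A $$ (j,c) else 0) else 0))"
    by (rule sum.cong) (use assms in auto)
  also have "\<dots> = A $$ (r,c) + (if r = i then b * A $$ (j,c) else 0)" 
    using assms by (simp add: sum.distrib)
  finally show ?thesis .
qed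

lemma mult_Xm_index:
  assumes "A \<in> carrier_mat m n" "r < m" "c < n" "i \<noteq> j" "i < n"
  shows "(A * Xm n i j b) $$ (r,c) = A $$ (r,c) + (if c = j then A $$ (r,i) * b else 0)"
proof -
  have "(A * Xm n i j b) $$ (r,c) = (\<Sum>l\<in>{0..<n}. A $$ (r,l) * (if l = c then 1 else if l = i \<and> c = j then b else 0))"
    using assms by (simp add: scalar_prod_def)
  also have "\<dots> = (\<Sum>l\<in>{0..<n}. (if l = c then A $$ (r,c) else 0) + (if l = i then (if c = j then A $$ (r,i) * b else 0) else 0))"
    by (rule sum.cong) (use assms in auto)
  also have "\<dots> = A $$ (r,c) + (if c = j then A $$ (r,i) * b else 0)" 
    using assms by (simp add: sum.distrib)
  finally show ?thesis .
qed

lemma dmat_mult_dmat: "dmat n d * dmat n e = dmat n (\<lambda>i. d i * e i)"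
  apply (rule eq_matI)
  apply (subst dmat_mult_index[where m=n])
  by auto

lemma det_dmat: "det (dmat n d) = (\<Prod>i<n. d i)"
proof -
  have "det (dmat n d) = prod_list (diag_mat (dmat n d))"
    by (rule det_upper_triangular) auto
  also have "\<dots> = (\<Prod>i<n. d i)"
    by (simp add: diag_mat_def prod.distinct_set_conv_list[of "[0..<n]", symmetric] atLeast0LessThan)
  finally show ?thesis .
qed



lemma Levi_carrier: "A \<in> Levi ns n \<Longrightarrow> A \<in> carrier_mat n n"
  by (simp add: Levi_def)

lemma Levi_det: "A \<in> Levi ns n \<Longrightarrow> det A \<noteq> 0"
  by (simp add: Levi_def)

lemma Levi_blk: "A \<in> Levi ns n \<Longrightarrow> i < n \<Longrightarrow> j < n \<Longrightarrow> blk ns i \<noteq> blk ns j \<Longrightarrow> A $$ (i,j) = 0"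
  by (simp add: Levi_def)

lemma mult_index_sum: "A \<in> carrier_mat n n \<Longrightarrow> B \<in> carrier_mat n n \<Longrightarrow> i < n \<Longrightarrow> j < n \<Longrightarrow>
   (A * B) $$ (i,j) = (\<Sum>l\<in>{0..<n}. A $$ (i,l) * B $$ (l,j))"
  by (simp add: scalar_prod_def)

lemma Levi_mult:
  assumes A: "A \<in> Levi ns n" and B: "B \<in> Levi ns n"
  shows "A * B \<in> Levi ns n"
proof -
  have cA: "A \<in> carrier_mat n n" and cB: "B \<in> carrier_mat n n" using A B by (auto simp: Levi_def)
  have "det (A * B) = det A * det B" using det_mult[OF cA cB] .
  hence "det (A * B) \<noteq> 0" using A B by (simp add: Levi_def)
  moreover have "(A * B) $$ (i,j) = 0" if "i < n" "j < n" "blk ns i \<noteq> blk ns j" for i j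
  proof -
    have "(A * B) $$ (i,j) = (\<Sum>l\<in>{0..<n}. A $$ (i,l) * B $$ (l,j))"
      using mult_index_sum[OF cA cB that(1,2)] .
    also have "\<dots> = 0"
    proof (rule sum.neutral, intro ballI)
      fix l assume l: "l \<in> {0..<n}"
      show "A $$ (i,l) * B $$ (l,j) = 0"
      proof (cases "blk ns i = blk ns l")
        case True
        then show ?thesis using Levi_blk[OF B, of l j] l that by auto
      next
        case False
        then show ?thesis using Levi_blk[OF A, of i l] l that by auto
      qed
    qed
    finally show ?thesis .
  qed
  ultimately show ?thesis using cA cB by (auto simp: Levi_def)
qed

lemma Levi'_mult: "A \<in> Levi' ns n \<Longrightarrow> B \<in> Levi' ns n \<Longrightarrow> A * B \<in> Levi' ns n"
proof -
  assume A: "A \<in> Levi' ns n" and B: "B \<in> Levi' ns n"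
  have "det (A * B) = det A * det B"
    using A B by (intro det_mult[of _ n]) (auto simp: Levi'_def Levi_def)
  then show ?thesis using A B Levi_mult[of A ns n B] by (auto simp: Levi'_def)
qed

lemma Levi'_Levi: "A \<in> Levi' ns n \<Longrightarrow> A \<in> Levi ns n"
  by (simp add: Levi'_def)

lemma one_Levi: "1\<^sub>m n \<in> Levi ns n"
  by (auto simp: Levi_def)

lemma one_Levi': "1\<^sub>m n \<in> Levi' ns n"
  by (auto simp: Levi'_def one_Levi)

lemma unitri_det:
  assumes "A \<in> carrier_mat n n" "\<forall>i<n. A $$ (i,i) = 1" "\<forall>i<n. \<forall>j<n. j < i \<longrightarrow> A $$ (i,j) = 0"
  shows "det A = 1"
proof -
  have "det A = prod_list (diag_mat A)"
    by (rule det_upper_triangular[OF _ assms(1)]) (use assms in auto)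
  also have "diag_mat A = map (\<lambda>i. 1) [0..<n]"
    using assms by (auto simp: diag_mat_def)
  also have "prod_list \<dots> = 1" by (induct n) auto
  finally show ?thesis .
qed

lemma UniI:
  assumes "A \<in> carrier_mat n n" "\<forall>i<n. A $$ (i,i) = 1" "\<forall>i<n. \<forall>j<n. j < i \<longrightarrow> A $$ (i,j) = 0"
    "\<forall>i<n. \<forall>j<n. blk ns i \<noteq> blk ns j \<longrightarrow> A $$ (i,j) = 0"
  shows "A \<in> Uni ns n"
  using assms unitri_det[OF assms(1-3)] by (auto simp: Uni_def Levi_def)

lemma Uni_Levi: "A \<in> Uni ns n \<Longrightarrow> A \<in> Levi ns n"
  by (simp add: Uni_def)

lemma Uni_carrier: "A \<in> Uni ns n \<Longrightarrow> A \<in> carrier_mat n n"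
  by (simp add: Uni_def Levi_def)

lemma Uni_diag: "A \<in> Uni ns n \<Longrightarrow> i < n \<Longrightarrow> A $$ (i,i) = 1"
  by (simp add: Uni_def)

lemma Uni_low: "A \<in> Uni ns n \<Longrightarrow> i < n \<Longrightarrow> j < i \<Longrightarrow> A $$ (i,j) = 0"
  by (simp add: Uni_def)

lemma Uni_det: "A \<in> Uni ns n \<Longrightarrow> det A = 1"
  by (rule unitri_det) (auto simp: Uni_def Levi_def)

lemma Uni_Levi': "A \<in> Uni ns n \<Longrightarrow> A \<in> Levi' ns n"
  by (simp add: Levi'_def Uni_det Uni_Levi)

lemma Uni_mult:
  assumes A: "A \<in> Uni ns n" and B: "B \<in> Uni ns n"
  shows "A * B \<in> Uni ns n"
proof -
  have cA: "A \<in> carrier_mat n n" and cB: "B \<in> carrier_mat n n" using A B by (auto simp: Uni_carrier)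
  have L: "A * B \<in> Levi ns n" using Levi_mult[OF Uni_Levi[OF A] Uni_Levi[OF B]] .
  have d: "(A * B) $$ (i,i) = 1" if "i < n" for i
  proof -
    have "(A * B) $$ (i,i) = (\<Sum>l\<in>{0..<n}. A $$ (i,l) * B $$ (l,i))"
      using mult_index_sum[OF cA cB that that] .
    also have "\<dots> = (\<Sum>l\<in>{0..<n}. if l = i then 1 else 0)"
    proof (rule sum.cong)
      fix l assume l: "l \<in> {0..<n}"
      show "A $$ (i,l) * B $$ (l,i) = (if l = i then 1 else 0)"
        using Uni_diag[OF A, of i] Uni_diag[OF B, of i] Uni_low[OF A, of i l] Uni_low[OF B, of l i] l that
        by (cases "l < i"; cases "l = i") auto
    qed simp
    also have "\<dots> = 1" using that by simp
    finally show ?thesis .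
  qed
  have lw: "(A * B) $$ (i,j) = 0" if "i < n" "j < i" for i j
  proof -
    have "(A * B) $$ (i,j) = (\<Sum>l\<in>{0..<n}. A $$ (i,l) * B $$ (l,j))"
      using mult_index_sum[OF cA cB that(1)] that by simp
    also have "\<dots> = 0"
    proof (rule sum.neutral, intro ballI)
      fix l assume l: "l \<in> {0..<n}"
      show "A $$ (i,l) * B $$ (l,j) = 0"
        using Uni_low[OF A, of i l] Uni_low[OF B, of l j] l that
        by (cases "l < i") auto
    qed
    finally show ?thesis .
  qed
  show ?thesis using L d lw by (auto simp: Uni_def)
qed

lemma one_Uni: "1\<^sub>m n \<in> Uni ns n"
  by (auto simp: Uni_def one_Levi)


lemma Xm_Levi':
  assumes "i < n" "j < n" "i \<noteq> j" "blk ns i = blk ns j"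
  shows "Xm n i j b \<in> Levi' ns n"
proof -
  have "det (Xm n i j b) = 1"
  proof (cases "i < j")
    case True
    have "det (Xm n i j b) = prod_list (diag_mat (Xm n i j b))"
      by (rule det_upper_triangular) (use True in \<open>auto intro!: upper_triangularI\<close>)
    also have "diag_mat (Xm n i j b) = map (\<lambda>i. 1) [0..<n]"
      by (auto simp: diag_mat_def)
    also have "prod_list \<dots> = 1" by (induct n) auto
    finally show ?thesis .
  next
    case False
    have "det (Xm n i j b) = prod_list (diag_mat (Xm n i j b))"
      by (rule det_lower_triangular[of n]) (use False in \<open>auto\<close>)
    also have "diag_mat (Xm n i j b) = map (\<lambda>i. 1) [0..<n]"
      by (auto simp: diag_mat_def)
    also have "prod_list \<dots> = 1" by (induct n) auto
    finally show ?thesis .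
  qed
  then show ?thesis using assms by (auto simp: Levi'_def Levi_def)
qed

lemma Xm_Uni:
  assumes "i < j" "j < n" "blk ns i = blk ns j"
  shows "Xm n i j b \<in> Uni ns n"
  using assms by (intro UniI) (auto simp del: Xm_index simp add: Xm_def)

lemma rootmat_Uni:
  assumes "Suc i < n" "blk ns i = blk ns (Suc i)"
  shows "rootmat n i a \<in> Uni ns n"
  unfolding rootmat_Xm using assms by (intro Xm_Uni) auto



definition dinv :: "nat \<Rightarrow> 'a::field mat \<Rightarrow> 'a mat" where
  "dinv n e = dmat n (\<lambda>i. inverse (e $$ (i,i)))"

lemma dinv_carrier[simp]: "dinv n e \<in> carrier_mat n n" "dim_row (dinv n e) = n" "dim_col (dinv n e) = n"
  by (auto simp: dinv_def)

lemma Tor_Levi: "e \<in> Tor ns n \<Longrightarrow> e \<in> Levi ns n"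
  by (simp add: Tor_def)

lemma Tor_carrier: "e \<in> Tor ns n \<Longrightarrow> e \<in> carrier_mat n n"
  by (simp add: Tor_def Levi_def)

lemma Tor_off: "e \<in> Tor ns n \<Longrightarrow> i < n \<Longrightarrow> j < n \<Longrightarrow> i \<noteq> j \<Longrightarrow> e $$ (i,j) = 0"
  by (simp add: Tor_def)

lemma sq_mult_carrier[simp]: "A \<in> carrier_mat n n \<Longrightarrow> B \<in> carrier_mat n n \<Longrightarrow> A * B \<in> carrier_mat n n"
  by simp

lemma massoc: "dim_col A = dim_row B \<Longrightarrow> dim_col B = dim_row C \<Longrightarrow> (A * B) * C = A * (B * C)"
  by (rule assoc_mult_mat) auto

lemma Tor_dmat: "e \<in> Tor ns n \<Longrightarrow> e = dmat n (\<lambda>i. e $$ (i,i))"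
  using Tor_carrier[of e ns n] by (intro eq_matI) (auto simp: Tor_off)

lemma Tor_diag_nz: assumes "e \<in> Tor ns n" "i < n" shows "e $$ (i,i) \<noteq> 0"
proof
  assume z: "e $$ (i,i) = 0"
  have "det e = (\<Prod>k<n. e $$ (k,k))"
    using det_dmat[of n "\<lambda>k. e $$ (k,k)"] Tor_dmat[OF assms(1)] by simp
  also have "\<dots> = 0" using z assms(2) by (intro prod_zero) auto
  finally show False using Tor_Levi[OF assms(1)] Levi_det by blast
qed

lemma dmat_Tor: assumes "\<forall>i<n. d i \<noteq> 0" shows "dmat n d \<in> Tor ns n"
proof -
  have "det (dmat n d) \<noteq> 0" unfolding det_dmat using assms by (simp add: prod_zero_iff)
  then show ?thesis by (auto simp: Tor_def Levi_def)
qed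

lemma dinv_Tor: "e \<in> Tor ns n \<Longrightarrow> dinv n e \<in> Tor ns n"
  unfolding dinv_def by (rule dmat_Tor) (auto dest: Tor_diag_nz)

lemma dinv_index: "i < n \<Longrightarrow> j < n \<Longrightarrow> dinv n e $$ (i,j) = (if i = j then inverse (e $$ (i,i)) else 0)"
  by (simp add: dinv_def)

lemma Tor_mult_dinv: assumes "e \<in> Tor ns n" shows "e * dinv n e = 1\<^sub>m n"
proof -
  have "e * dinv n e = dmat n (\<lambda>i. e $$ (i,i) * inverse (e $$ (i,i)))"
    by (subst Tor_dmat[OF assms]) (simp add: dinv_def dmat_mult_dmat)
  also have "\<dots> = 1\<^sub>m n"
    by (rule eq_matI) (auto simp: Tor_diag_nz[OF assms])
  finally show ?thesis .
qed

lemma dinv_mult_Tor: assumes "e \<in> Tor ns n" shows "dinv n e * e = 1\<^sub>m n"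
proof -
  have "dinv n e * e = dmat n (\<lambda>i. inverse (e $$ (i,i)) * e $$ (i,i))"
    by (subst (2) Tor_dmat[OF assms]) (simp add: dinv_def dmat_mult_dmat)
  also have "\<dots> = 1\<^sub>m n"
    by (rule eq_matI) (auto simp: Tor_diag_nz[OF assms])
  finally show ?thesis .
qed

lemma det_dinv: assumes "e \<in> Tor ns n" shows "det (dinv n e) * det e = 1"
  using det_mult[of "dinv n e" n e] dinv_mult_Tor[OF assms] Tor_carrier[OF assms] by simp

lemma Tor_mult: assumes "e \<in> Tor ns n" "f \<in> Tor ns n" shows "e * f \<in> Tor ns n"
proof -
  have "e * f = dmat n (\<lambda>i. e $$ (i,i) * f $$ (i,i))"
    by (subst Tor_dmat[OF assms(1)], subst Tor_dmat[OF assms(2)]) (simp add: dmat_mult_dmat)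
  also have "\<dots> \<in> Tor ns n" by (rule dmat_Tor) (auto dest: Tor_diag_nz[OF assms(1)] Tor_diag_nz[OF assms(2)])
  finally show ?thesis .
qed

lemma Tor_mult_index: assumes "e \<in> Tor ns n" "f \<in> Tor ns n" "i < n"
  shows "(e * f) $$ (i,i) = e $$ (i,i) * f $$ (i,i)"
  by (subst Tor_dmat[OF assms(1)], subst Tor_dmat[OF assms(2)]) (simp add: dmat_mult_dmat assms)

lemma dinv_mult: assumes "e \<in> Tor ns n" "f \<in> Tor ns n"
  shows "dinv n (e * f) = dinv n f * dinv n e"
  unfolding dinv_def dmat_mult_dmat
  by (rule eq_matI) (auto simp: Tor_mult_index[OF assms] mult.commute)

lemma conj_index:
  assumes e: "e \<in> Tor ns n" and A: "A \<in> carrier_mat n n" and rc: "r < n" "c < n"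
  shows "(e * A * dinv n e) $$ (r,c) = e $$ (r,r) * A $$ (r,c) * inverse (e $$ (c,c))"
proof -
  have "e * A * dinv n e = dmat n (\<lambda>i. e $$ (i,i)) * A * dmat n (\<lambda>i. inverse (e $$ (i,i)))"
    using Tor_dmat[OF e] by (simp add: dinv_def)
  also have "\<dots> $$ (r,c) = (dmat n (\<lambda>i. e $$ (i,i)) * A) $$ (r,c) * inverse (e $$ (c,c))"
    by (rule mult_dmat_index[where m=n]) (use A rc in auto)
  also have "(dmat n (\<lambda>i. e $$ (i,i)) * A) $$ (r,c) = e $$ (r,r) * A $$ (r,c)"
    by (rule dmat_mult_index[where m=n]) (use A rc in auto)
  finally show ?thesis .
qed

lemma conj_carrier: "e \<in> carrier_mat n n \<Longrightarrow> e * A * dinv n e \<in> carrier_mat n n"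
  by (intro carrier_matI) auto

lemma Tor_dims: "e \<in> Tor ns n \<Longrightarrow> dim_row e = n \<and> dim_col e = n"
  using Tor_carrier by auto

lemma cancel1: "e \<in> Tor ns n \<Longrightarrow> dim_row X = n \<Longrightarrow> e * (dinv n e * X) = X"
  by (simp add: massoc[symmetric] Tor_dims Tor_mult_dinv)

lemma cancel2: "e \<in> Tor ns n \<Longrightarrow> dim_row X = n \<Longrightarrow> dinv n e * (e * X) = X"
  by (simp add: massoc[symmetric] Tor_dims dinv_mult_Tor)

lemma conj_Uni:
  assumes e: "e \<in> Tor ns n" and u: "u \<in> Uni ns n"
  shows "e * u * dinv n e \<in> Uni ns n"
proof (rule UniI)
  show "e * u * dinv n e \<in> carrier_mat n n" using Tor_carrier[OF e] by (rule conj_carrier)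
  show "\<forall>i<n. (e * u * dinv n e) $$ (i, i) = 1"
    using Tor_diag_nz[OF e] Uni_diag[OF u] by (simp add: conj_index[OF e Uni_carrier[OF u]])
  show "\<forall>i<n. \<forall>j<n. j < i \<longrightarrow> (e * u * dinv n e) $$ (i, j) = 0"
    using Uni_low[OF u] by (simp add: conj_index[OF e Uni_carrier[OF u]])
  show "\<forall>i<n. \<forall>j<n. blk ns i \<noteq> blk ns j \<longrightarrow> (e * u * dinv n e) $$ (i, j) = 0"
    using Levi_blk[OF Uni_Levi[OF u]] by (simp add: conj_index[OF e Uni_carrier[OF u]])
qed

lemma conj_rootmat:
  assumes e: "e \<in> Tor ns n" and i: "Suc i < n"
  shows "e * rootmat n i a * dinv n e = rootmat n i (e $$ (i,i) * a * inverse (e $$ (Suc i, Suc i)))"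
  unfolding rootmat_Xm
proof (rule eq_matI)
  fix r c assume rc: "r < dim_row (Xm n i (Suc i) (e $$ (i, i) * a * inverse (e $$ (Suc i, Suc i))))"
    "c < dim_col (Xm n i (Suc i) (e $$ (i, i) * a * inverse (e $$ (Suc i, Suc i))))"
  show "(e * Xm n i (Suc i) a * dinv n e) $$ (r, c) = Xm n i (Suc i) (e $$ (i, i) * a * inverse (e $$ (Suc i, Suc i))) $$ (r, c)"
    using rc Tor_diag_nz[OF e] by (subst conj_index[OF e]) auto
qed (use Tor_carrier[OF e] in auto)

lemma conj_mult:
  assumes e: "e \<in> Tor ns n" and A: "A \<in> carrier_mat n n" and B: "B \<in> carrier_mat n n"
  shows "e * (A * B) * dinv n e = (e * A * dinv n e) * (e * B * dinv n e)"
  using Tor_carrier[OF e] A B by (simp add: massoc cancel2[OF e])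

lemma conj_conj:
  assumes e: "e \<in> Tor ns n" and f: "f \<in> Tor ns n" and A: "A \<in> carrier_mat n n"
  shows "(e * f) * A * dinv n (e * f) = e * (f * A * dinv n f) * dinv n e"
  using Tor_carrier[OF e] Tor_carrier[OF f] A
  by (simp add: dinv_mult[OF e f] massoc)

lemma conj_inv:
  assumes e: "e \<in> Tor ns n" and A: "A \<in> carrier_mat n n"
  shows "e * (dinv n e * A * e) * dinv n e = A" "dinv n e * (e * A * dinv n e) * e = A"
  using Tor_carrier[OF e] A
  by (simp_all add: massoc cancel1[OF e] cancel2[OF e] Tor_mult_dinv[OF e] dinv_mult_Tor[OF e])



lemma card_nonzero_W:
  assumes w: "witt_alg_closed l TYPE('w::idom)" and nd: "\<not> l dvd q"
  shows "(of_nat q :: 'w) \<noteq> 0"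
proof
  assume q0: "(of_nat q :: 'w) = 0"
  have pl: "prime l" and nu: "\<not> (of_nat l :: 'w) dvd 1" using w by (auto simp: witt_alg_closed_def)
  have "coprime l q" using prime_imp_coprime[OF pl nd] .
  hence "gcd l q = 1" by (simp add: coprime_iff_gcd_eq_1)
  hence "gcd (int l) (int q) = 1" by (simp add: gcd_int_int_eq)
  then obtain u v where uv: "u * int l + v * int q = 1" using bezout_int[of "int l" "int q"] by auto
  hence "(of_int (u * int l + v * int q) :: 'w) = 1" by simp
  hence "of_int u * (of_nat l :: 'w) = 1" using q0 by simp
  hence "(of_nat l :: 'w) dvd 1" by (metis dvd_triv_right)
  with nu show False by simp
qed

lemma char_zero:
  fixes \<chi> :: "'f::field \<Rightarrow> 'w::idom"
  assumes add: "\<forall>a b. \<chi> (a + b) = \<chi> a * \<chi> b" and nz: "\<chi> 0 \<noteq> 0"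
  shows "\<chi> 0 = 1"
proof -
  have "\<chi> 0 * \<chi> 0 = \<chi> 0 * 1" using add[rule_format, of 0 0] by simp
  thus ?thesis using nz by simp
qed

lemma char_sum_zero:
  fixes \<chi> :: "'f::{finite,field} \<Rightarrow> 'w::idom"
  assumes add: "\<forall>a b. \<chi> (a + b) = \<chi> a * \<chi> b" and b: "\<chi> b \<noteq> 1"
  shows "(\<Sum>a\<in>UNIV. \<chi> a) = 0"
proof -
  let ?S = "\<Sum>a\<in>UNIV. \<chi> a"
  have "?S = (\<Sum>a\<in>UNIV. \<chi> (a + b))"
    by (rule sum.reindex_bij_witness[of _ "\<lambda>a. a + b" "\<lambda>a. a - b"]) auto
  also have "\<dots> = \<chi> b * ?S" using add by (simp add: sum_distrib_left mult.commute)
  finally have "(\<chi> b - 1) * ?S = 0" by (simp add: algebra_simps)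
  thus ?thesis using b by simp
qed

lemma char_transitive:
  fixes \<psi> \<phi> :: "'f::{finite,field} \<Rightarrow> 'w::idom"
  assumes ap: "\<forall>a b. \<psi> (a + b) = \<psi> a * \<psi> b" and af: "\<forall>a b. \<phi> (a + b) = \<phi> a * \<phi> b"
    and p0: "\<psi> 0 = 1" and f0: "\<phi> 0 = 1"
    and pb: "\<psi> b \<noteq> 1" and fb: "\<phi> b' \<noteq> 1"
    and q: "(of_nat (card (UNIV :: 'f set)) :: 'w) \<noteq> 0"
  shows "\<exists>c. c \<noteq> 0 \<and> (\<forall>a. \<phi> a = \<psi> (c * a))"
proof -
  have inner: "(\<Sum>c\<in>UNIV. \<psi> (c * a)) = (if a = 0 then of_nat (card (UNIV :: 'f set)) else 0)" for a
  proof (cases "a = 0")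
    case True then show ?thesis using p0 by simp
  next
    case False
    have "(\<Sum>c\<in>UNIV. \<psi> (c * a)) = 0"
    proof (rule char_sum_zero[where b = "b / a"])
      show "\<forall>x y. \<psi> ((x + y) * a) = \<psi> (x * a) * \<psi> (y * a)" using ap by (simp add: distrib_right)
      show "\<psi> (b / a * a) \<noteq> 1" using pb False by simp
    qed
    then show ?thesis using False by simp
  qed
  have "(\<Sum>c\<in>UNIV. \<Sum>a\<in>UNIV. \<psi> (c * a) * \<phi> (- a)) = (\<Sum>a\<in>UNIV. \<Sum>c\<in>UNIV. \<psi> (c * a) * \<phi> (- a))"
    by (rule sum.swap)
  also have "\<dots> = (\<Sum>a\<in>UNIV. \<phi> (- a) * (\<Sum>c\<in>UNIV. \<psi> (c * a)))"
    by (simp add: sum_distrib_left mult.commute)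
  also have "\<dots> = (\<Sum>a::'f\<in>UNIV. if a = 0 then of_nat (card (UNIV :: 'f set)) else 0)"
    by (rule sum.cong) (auto simp: inner f0)
  also have "\<dots> = of_nat (card (UNIV :: 'f set))" by simp
  finally have tot: "(\<Sum>c\<in>UNIV. \<Sum>a\<in>UNIV. \<psi> (c * a) * \<phi> (- a)) \<noteq> 0" using q by simp
  then obtain c where c: "(\<Sum>a\<in>UNIV. \<psi> (c * a) * \<phi> (- a)) \<noteq> 0"
    by (metis (no_types, lifting) sum.neutral UNIV_I)
  have triv: "\<psi> (c * a) * \<phi> (- a) = 1" for a
  proof (rule ccontr)
    assume "\<psi> (c * a) * \<phi> (- a) \<noteq> 1"
    hence "(\<Sum>a\<in>UNIV. \<psi> (c * a) * \<phi> (- a)) = 0"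
    proof (intro char_sum_zero[where b = a])
      show "\<forall>x y. \<psi> (c * (x + y)) * \<phi> (- (x + y)) = \<psi> (c * x) * \<phi> (- x) * (\<psi> (c * y) * \<phi> (- y))"
      proof (intro allI)
        fix x y
        have e1: "\<psi> (c * (x + y)) = \<psi> (c * x) * \<psi> (c * y)"
          using ap[rule_format, of "c * x" "c * y"] by (simp add: distrib_left)
        have e2: "\<phi> (- (x + y)) = \<phi> (- x) * \<phi> (- y)"
          using af[rule_format, of "- x" "- y"] by (simp add: add.commute)
        show "\<psi> (c * (x + y)) * \<phi> (- (x + y)) = \<psi> (c * x) * \<phi> (- x) * (\<psi> (c * y) * \<phi> (- y))"
          unfolding e1 e2 by (simp add: ac_simps)
      qed
    qed
    with c show False by simp
  qed
  have eq: "\<phi> a = \<psi> (c * a)" for a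
  proof -
    have inv: "\<phi> a * \<phi> (- a) = 1" using af[rule_format, of a "- a"] f0 by simp
    have "\<phi> a = \<phi> a * (\<psi> (c * a) * \<phi> (- a))" using triv[of a] by simp
    also have "\<dots> = \<psi> (c * a) * (\<phi> a * \<phi> (- a))" by (simp add: ac_simps)
    also have "\<dots> = \<psi> (c * a)" using inv by simp
    finally show ?thesis .
  qed
  have "c \<noteq> 0"
  proof
    assume "c = 0"
    hence "\<phi> b' = 1" using eq[of b'] p0 by simp
    with fb show False by simp
  qed
  with eq show ?thesis by blast
qed



lemma mult_Xm_sq:
  assumes "A \<in> carrier_mat n n" "r < n" "c < n" "i \<noteq> j" "i < n"
  shows "(A * Xm n i j b) $$ (r,c) = A $$ (r,c) + (if c = j then A $$ (r,i) * b else 0)"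
  using mult_Xm_index[OF assms] .

lemma Xm_mult_Xm:
  assumes "i \<noteq> j" "i < n" "j < n"
  shows "Xm n i j a * Xm n i j b = Xm n i j (a + b)"
proof (rule eq_matI)
  fix r c assume rc: "r < dim_row (Xm n i j (a + b))" "c < dim_col (Xm n i j (a + b))"
  show "(Xm n i j a * Xm n i j b) $$ (r, c) = Xm n i j (a + b) $$ (r, c)"
    using rc assms by (subst mult_Xm_sq) auto
qed auto

lemma Xm_comm:
  assumes "i \<noteq> k" "k \<noteq> j" "i \<noteq> j" "i < n" "j < n" "k < n"
  shows "Xm n i k a * Xm n k j b * Xm n i k (-a) * Xm n k j (-b) = Xm n i j (a * b)"
proof (rule eq_matI)
  fix r c assume rc: "r < dim_row (Xm n i j (a * b))" "c < dim_col (Xm n i j (a * b))"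
  hence rc': "r < n" "c < n" by auto
  have c1: "Xm n i k a * Xm n k j b \<in> carrier_mat n n" by simp
  have c2: "Xm n i k a * Xm n k j b * Xm n i k (-a) \<in> carrier_mat n n" by simp
  have e1: "(Xm n i k a * Xm n k j b) $$ (x,y) = Xm n i k a $$ (x,y) + (if y = j then Xm n i k a $$ (x,k) * b else 0)"
    if "x < n" "y < n" for x y using mult_Xm_sq[OF Xm_carrier that assms(2) assms(6)] .
  have e2: "(Xm n i k a * Xm n k j b * Xm n i k (-a)) $$ (x,y) = (Xm n i k a * Xm n k j b) $$ (x,y) + (if y = k then (Xm n i k a * Xm n k j b) $$ (x,i) * (-a) else 0)"
    if "x < n" "y < n" for x y using mult_Xm_sq[OF c1 that assms(1) assms(4)] .
  have e3: "(Xm n i k a * Xm n k j b * Xm n i k (-a) * Xm n k j (-b)) $$ (r,c) = (Xm n i k a * Xm n k j b * Xm n i k (-a)) $$ (r,c) + (if c = j then (Xm n i k a * Xm n k j b * Xm n i k (-a)) $$ (r,k) * (-b) else 0)"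
    using mult_Xm_sq[OF c2 rc' assms(2) assms(6)] .
  show "(Xm n i k a * Xm n k j b * Xm n i k (-a) * Xm n k j (-b)) $$ (r, c) = Xm n i j (a * b) $$ (r, c)"
    unfolding e3 e2[OF rc'] e2[OF rc'(1) assms(6)] e1[OF rc'] e1[OF rc'(1) assms(4)] e1[OF rc'(1) assms(6)]
    using rc' assms by auto
qed auto

lemma prod4_hom:
  fixes \<mu> :: "'f::field mat \<Rightarrow> 'w::idom"
  assumes hom: "\<forall>u\<in>Uni ns n. \<forall>v\<in>Uni ns n. \<mu> (u * v) = \<mu> u * \<mu> v"
    and A: "A \<in> Uni ns n" and B: "B \<in> Uni ns n" and C: "C \<in> Uni ns n" and D: "D \<in> Uni ns n"
  shows "\<mu> (A * B * C * D) = \<mu> A * \<mu> B * \<mu> C * \<mu> D"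
proof -
  have AB: "A * B \<in> Uni ns n" using Uni_mult[OF A B] .
  have ABC: "A * B * C \<in> Uni ns n" using Uni_mult[OF AB C] .
  have "\<mu> (A * B * C * D) = \<mu> (A * B * C) * \<mu> D" using hom ABC D by blast
  also have "\<mu> (A * B * C) = \<mu> (A * B) * \<mu> C" using hom AB C by blast
  also have "\<mu> (A * B) = \<mu> A * \<mu> B" using hom A B by blast
  finally show ?thesis .
qed

lemma root_agree:
  fixes \<mu> \<nu> :: "'f::field mat \<Rightarrow> 'w::idom"
  assumes hm: "\<forall>u\<in>Uni ns n. \<forall>v\<in>Uni ns n. \<mu> (u * v) = \<mu> u * \<mu> v"
    and hn: "\<forall>u\<in>Uni ns n. \<forall>v\<in>Uni ns n. \<nu> (u * v) = \<nu> u * \<nu> v"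
    and rt: "\<forall>i a. Suc i < n \<and> blk ns i = blk ns (Suc i) \<longrightarrow> \<mu> (rootmat n i a) = \<nu> (rootmat n i a)"
  shows "\<forall>i j a. j = i + Suc d \<and> j < n \<and> blk ns i = blk ns j \<longrightarrow> \<mu> (Xm n i j a) = \<nu> (Xm n i j a)"
proof (induction d)
  case 0
  then show ?case using rt by (auto simp: rootmat_Xm)
next
  case (Suc d)
  show ?case
  proof (intro allI impI)
    fix i j and a :: 'f assume h: "j = i + Suc (Suc d) \<and> j < n \<and> blk ns i = blk ns j"
    let ?k = "Suc i"
    have bk: "blk ns ?k = blk ns i" using h blk_between[of i ?k j ns] by auto
    have bk2: "blk ns ?k = blk ns j" using bk h by simp
    have eq: "Xm n i j a = Xm n i ?k a * Xm n ?k j 1 * Xm n i ?k (-a) * Xm n ?k j (-1)"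
      using Xm_comm[of i ?k j n a 1] h by simp
    have U1: "Xm n i ?k b \<in> Uni ns n" for b using h bk by (intro Xm_Uni) auto
    have U2: "Xm n ?k j b \<in> Uni ns n" for b using h bk2 by (intro Xm_Uni) auto
    have r1: "\<mu> (Xm n i ?k b) = \<nu> (Xm n i ?k b)" for b using rt h bk by (auto simp: rootmat_Xm)
    have jj: "j = ?k + Suc d \<and> j < n \<and> blk ns ?k = blk ns j" using h bk2 by simp
    have r2: "\<mu> (Xm n ?k j b) = \<nu> (Xm n ?k j b)" for b using Suc.IH jj by blast
    show "\<mu> (Xm n i j a) = \<nu> (Xm n i j a)"
      unfolding eq prod4_hom[OF hm U1 U2 U1 U2] prod4_hom[OF hn U1 U2 U1 U2] r1 r2 ..
  qed
qed

lemma Xm_agree: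
  fixes \<mu> \<nu> :: "'f::field mat \<Rightarrow> 'w::idom"
  assumes hm: "\<forall>u\<in>Uni ns n. \<forall>v\<in>Uni ns n. \<mu> (u * v) = \<mu> u * \<mu> v"
    and hn: "\<forall>u\<in>Uni ns n. \<forall>v\<in>Uni ns n. \<nu> (u * v) = \<nu> u * \<nu> v"
    and rt: "\<forall>i a. Suc i < n \<and> blk ns i = blk ns (Suc i) \<longrightarrow> \<mu> (rootmat n i a) = \<nu> (rootmat n i a)"
    and ij: "i < j" "j < n" "blk ns i = blk ns j"
  shows "\<mu> (Xm n i j a) = \<nu> (Xm n i j a)"
proof -
  have "\<exists>d. j = i + Suc d" using ij(1) by (auto simp: less_iff_Suc_add)
  then obtain d where "j = i + Suc d" by blast
  then show ?thesis using root_agree[OF hm hn rt, of d] ij by blast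
qed

definition offsupp :: "nat \<Rightarrow> 'a::zero mat \<Rightarrow> (nat \<times> nat) set" where
  "offsupp n u = {(r,c). r < n \<and> c < n \<and> r \<noteq> c \<and> u $$ (r,c) \<noteq> 0}"

lemma finite_offsupp: "finite (offsupp n u)"
  by (rule finite_subset[of _ "{0..<n} \<times> {0..<n}"]) (auto simp: offsupp_def)

lemma hom_agree:
  fixes \<mu> \<nu> :: "'f::field mat \<Rightarrow> 'w::idom"
  assumes hm: "\<forall>u\<in>Uni ns n. \<forall>v\<in>Uni ns n. \<mu> (u * v) = \<mu> u * \<mu> v"
    and hn: "\<forall>u\<in>Uni ns n. \<forall>v\<in>Uni ns n. \<nu> (u * v) = \<nu> u * \<nu> v"
    and rt: "\<forall>i a. Suc i < n \<and> blk ns i = blk ns (Suc i) \<longrightarrow> \<mu> (rootmat n i a) = \<nu> (rootmat n i a)"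
    and one: "\<mu> (1\<^sub>m n) = \<nu> (1\<^sub>m n)"
  shows "u \<in> Uni ns n \<Longrightarrow> \<mu> u = \<nu> u"
proof (induction "card (offsupp n u)" arbitrary: u rule: less_induct)
  case less
  note u = less.prems
  have cu: "u \<in> carrier_mat n n" using Uni_carrier[OF u] .
  show ?case
  proof (cases "offsupp n u = {}")
    case True
    have "u = 1\<^sub>m n"
    proof (rule eq_matI)
      fix r c assume "r < dim_row (1\<^sub>m n)" "c < dim_col (1\<^sub>m n)"
      then show "u $$ (r,c) = 1\<^sub>m n $$ (r,c)"
        using True Uni_diag[OF u, of r] by (auto simp: offsupp_def)
    qed (use cu in auto)
    then show ?thesis using one by simp
  next
    case False
    define j where "j = Max (snd ` offsupp n u)"
    have "j \<in> snd ` offsupp n u" unfolding j_def using False finite_offsupp by (intro Max_in) auto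
    then obtain i where ij: "(i,j) \<in> offsupp n u" by auto
    have jmax: "c \<le> j" if "(r,c) \<in> offsupp n u" for r c
      unfolding j_def using that finite_offsupp by (intro Max_ge) force+
    have i: "i < n" "j < n" "i \<noteq> j" "u $$ (i,j) \<noteq> 0" using ij by (auto simp: offsupp_def)
    have ilj: "i < j" using i Uni_low[OF u, of i j] by (cases "j < i") auto
    have bij: "blk ns i = blk ns j" using i Levi_blk[OF Uni_Levi[OF u], of i j] by auto
    have rowj: "u $$ (j,c) = (if c = j then 1 else 0)" if "c < n" for c
    proof -
      consider "c < j" | "c = j" | "j < c" by arith
      then show ?thesis
      proof cases
        case 1 then show ?thesis using Uni_low[OF u, of j c] i by auto
      next
        case 2 then show ?thesis using Uni_diag[OF u] i by auto
      next
        case 3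
        hence "(j,c) \<notin> offsupp n u" using jmax[of j c] by auto
        then show ?thesis using 3 that i by (auto simp: offsupp_def)
      qed
    qed
    define b where "b = u $$ (i,j)"
    define u' where "u' = Xm n i j (-b) * u"
    have XU: "Xm n i j x \<in> Uni ns n" for x using ilj i bij by (intro Xm_Uni) auto
    have u'U: "u' \<in> Uni ns n" unfolding u'_def using Uni_mult[OF XU u] .
    have cu': "u' \<in> carrier_mat n n" using Uni_carrier[OF u'U] .
    have u'e: "u' $$ (r,c) = (if r = i \<and> c = j then 0 else u $$ (r,c))" if "r < n" "c < n" for r c
      unfolding u'_def using Xm_mult_index[OF cu that i(3) i(2), of "-b"] rowj[OF that(2)] b_def by auto
    have supp: "offsupp n u' = offsupp n u - {(i,j)}"
      unfolding offsupp_def by (auto simp: u'e split: if_splits)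
    have lt: "card (offsupp n u') < card (offsupp n u)"
      unfolding supp by (rule card_Diff1_less[OF finite_offsupp ij])
    have IH: "\<mu> u' = \<nu> u'" using less.hyps[OF lt u'U] .
    have ueq: "u = Xm n i j b * u'"
    proof (rule eq_matI)
      fix r c assume "r < dim_row (Xm n i j b * u')" "c < dim_col (Xm n i j b * u')"
      hence rc: "r < n" "c < n" using cu' by auto
      show "u $$ (r,c) = (Xm n i j b * u') $$ (r,c)"
        using Xm_mult_index[OF cu' rc i(3) i(2), of b] u'e[OF rc] u'e[OF i(2) rc(2)] rowj[OF rc(2)] b_def i(3)
        by auto
    qed (use cu cu' in auto)
    have "\<mu> u = \<mu> (Xm n i j b) * \<mu> u'" using hm XU u'U ueq by metis
    also have "\<dots> = \<nu> (Xm n i j b) * \<nu> u'" using Xm_agree[OF hm hn rt ilj i(2) bij] IH by simp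
    also have "\<dots> = \<nu> u" using hn XU u'U ueq by metis
    finally show ?thesis .
  qed
qed



definition cj :: "nat \<Rightarrow> 'f::field mat \<Rightarrow> ('f mat \<Rightarrow> 'w) \<Rightarrow> ('f mat \<Rightarrow> 'w)" where
  "cj n e \<mu> = (\<lambda>u. \<mu> (e * u * dinv n e))"

lemma rootmat_zero: "rootmat n i 0 = 1\<^sub>m n"
  unfolding rootmat_def by (rule eq_matI) auto

lemma rootmat_add: "Suc i < n \<Longrightarrow> rootmat n i a * rootmat n i b = rootmat n i (a + b)"
  unfolding rootmat_Xm by (rule Xm_mult_Xm) auto

lemma nondeg_unit: "\<mu> \<in> nondeg_chars ns n \<Longrightarrow> u \<in> Uni ns n \<Longrightarrow> \<mu> u dvd 1"
  by (simp add: nondeg_chars_def)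

lemma nondeg_hom: "\<mu> \<in> nondeg_chars ns n \<Longrightarrow> \<forall>u\<in>Uni ns n. \<forall>v\<in>Uni ns n. \<mu> (u * v) = \<mu> u * \<mu> v"
  by (simp add: nondeg_chars_def)

lemma nondeg_root: "\<mu> \<in> nondeg_chars ns n \<Longrightarrow> Suc i < n \<Longrightarrow> blk ns i = blk ns (Suc i) \<Longrightarrow> \<exists>a. \<mu> (rootmat n i a) \<noteq> 1"
  by (simp add: nondeg_chars_def)

lemma nondeg_one:
  assumes "\<mu> \<in> nondeg_chars ns n"
  shows "\<mu> (1\<^sub>m n) = (1 :: 'w::idom)"
proof -
  have u: "\<mu> (1\<^sub>m n) dvd 1" using nondeg_unit[OF assms one_Uni] .
  have h: "\<mu> (1\<^sub>m n * 1\<^sub>m n) = \<mu> (1\<^sub>m n) * \<mu> (1\<^sub>m n)" using nondeg_hom[OF assms] one_Uni by blast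
  have "\<mu> (1\<^sub>m n) \<noteq> 0"
  proof
    assume "\<mu> (1\<^sub>m n) = 0" with u show False by simp
  qed
  moreover have "\<mu> (1\<^sub>m n) * \<mu> (1\<^sub>m n) = \<mu> (1\<^sub>m n) * 1" using h by simp
  ultimately show ?thesis by simp
qed

lemma nondeg_psi:
  assumes m: "\<mu> \<in> nondeg_chars ns n" and i: "Suc i < n" "blk ns i = blk ns (Suc i)"
  shows "\<forall>a b. \<mu> (rootmat n i (a + b)) = \<mu> (rootmat n i a) * (\<mu> (rootmat n i b) :: 'w::idom)"
    "\<mu> (rootmat n i 0) = 1" "\<mu> (rootmat n i a) \<noteq> 0"
proof -
  show "\<forall>a b. \<mu> (rootmat n i (a + b)) = \<mu> (rootmat n i a) * \<mu> (rootmat n i b)"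
    using nondeg_hom[OF m] rootmat_Uni[OF i] rootmat_add[OF i(1)] by metis
  show "\<mu> (rootmat n i 0) = 1" using nondeg_one[OF m] by (simp add: rootmat_zero)
  show "\<mu> (rootmat n i a) \<noteq> 0"
  proof
    assume "\<mu> (rootmat n i a) = 0" with nondeg_unit[OF m rootmat_Uni[OF i], of a] show False by simp
  qed
qed

lemma cj_nondeg:
  fixes \<mu> :: "'f::field mat \<Rightarrow> 'w::idom"
  assumes m: "\<mu> \<in> nondeg_chars ns n" and e: "e \<in> Tor ns n"
  shows "cj n e \<mu> \<in> nondeg_chars ns n"
  unfolding nondeg_chars_def mem_Collect_eq
proof (intro conjI ballI allI impI)
  fix u :: "'f mat" assume u: "u \<in> Uni ns n"
  show "cj n e \<mu> u dvd 1" unfolding cj_def using nondeg_unit[OF m conj_Uni[OF e u]] .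
next
  fix u v :: "'f mat" assume u: "u \<in> Uni ns n" and v: "v \<in> Uni ns n"
  show "cj n e \<mu> (u * v) = cj n e \<mu> u * cj n e \<mu> v"
    unfolding cj_def conj_mult[OF e Uni_carrier[OF u] Uni_carrier[OF v]]
    using nondeg_hom[OF m] conj_Uni[OF e u] conj_Uni[OF e v] by blast
next
  fix i assume i: "Suc i < n \<and> blk ns i = blk ns (Suc i)"
  obtain a where a: "\<mu> (rootmat n i a) \<noteq> 1" using nondeg_root[OF m] i by blast
  let ?r = "e $$ (i,i) * inverse (e $$ (Suc i, Suc i))"
  have r: "?r \<noteq> 0" using Tor_diag_nz[OF e] i by auto
  have "cj n e \<mu> (rootmat n i (a / ?r)) = \<mu> (rootmat n i (e $$ (i,i) * (a / ?r) * inverse (e $$ (Suc i, Suc i))))"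
    unfolding cj_def conj_rootmat[OF e conjunct1[OF i]] ..
  also have "e $$ (i,i) * (a / ?r) * inverse (e $$ (Suc i, Suc i)) = a"
    using r by (simp add: field_simps)
  finally show "\<exists>a. cj n e \<mu> (rootmat n i a) \<noteq> 1" using a by metis
qed

primrec dseq :: "(nat \<Rightarrow> 'f::field) \<Rightarrow> nat \<Rightarrow> 'f" where
  "dseq C 0 = 1"
| "dseq C (Suc i) = dseq C i * inverse (C i)"

lemma dseq_nz: "(\<forall>i. C i \<noteq> 0) \<Longrightarrow> dseq C i \<noteq> 0"
  by (induct i) auto

lemma transitive:
  fixes \<mu>0 \<nu> :: "'f::{finite,field} mat \<Rightarrow> 'w::idom"
  assumes m: "\<mu>0 \<in> nondeg_chars ns n" and v: "\<nu> \<in> nondeg_chars ns n"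
    and q: "(of_nat (card (UNIV :: 'f set)) :: 'w) \<noteq> 0"
  shows "\<exists>e\<in>Tor ns n. \<forall>u\<in>Uni ns n. \<nu> u = \<mu>0 (e * u * dinv n e)"
proof -
  define P where "P i \<longleftrightarrow> Suc i < n \<and> blk ns i = blk ns (Suc i)" for i
  have ex: "\<exists>c. c \<noteq> 0 \<and> (\<forall>a. \<nu> (rootmat n i a) = \<mu>0 (rootmat n i (c * a)))" if "P i" for i
  proof -
    have i: "Suc i < n" "blk ns i = blk ns (Suc i)" using that by (auto simp: P_def)
    obtain b where b: "\<mu>0 (rootmat n i b) \<noteq> 1" using nondeg_root[OF m i] by blast
    obtain b' where b': "\<nu> (rootmat n i b') \<noteq> 1" using nondeg_root[OF v i] by blast
    show ?thesis
      by (rule char_transitive[where \<psi> = "\<lambda>a. \<mu>0 (rootmat n i a)" and \<phi> = "\<lambda>a. \<nu> (rootmat n i a)", OF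
          nondeg_psi(1)[OF m i] nondeg_psi(1)[OF v i] nondeg_psi(2)[OF m i] nondeg_psi(2)[OF v i] b b' q])
  qed
  define C where "C i = (if P i then SOME c. c \<noteq> 0 \<and> (\<forall>a. \<nu> (rootmat n i a) = \<mu>0 (rootmat n i (c * a))) else 1)" for i
  have C: "C i \<noteq> 0 \<and> (\<forall>a. \<nu> (rootmat n i a) = \<mu>0 (rootmat n i (C i * a)))" if "P i" for i
  proof -
    have e: "C i = (SOME c. c \<noteq> 0 \<and> (\<forall>a. \<nu> (rootmat n i a) = \<mu>0 (rootmat n i (c * a))))"
      using that unfolding C_def by (simp only: if_True)
    show ?thesis unfolding e by (rule someI_ex[OF ex[OF that]])
  qed
  have Cnz: "\<forall>i. C i \<noteq> 0"
  proof
    fix i show "C i \<noteq> 0"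
    proof (cases "P i")
      case True then show ?thesis using C[OF True] by blast
    next
      case False then show ?thesis unfolding C_def by simp
    qed
  qed
  define e where "e = dmat n (dseq C)"
  have eT: "e \<in> Tor ns n" unfolding e_def by (rule dmat_Tor) (use dseq_nz[OF Cnz] in auto)
  have ediag: "e $$ (i,i) = dseq C i" if "i < n" for i using that by (simp add: e_def)
  have hom1: "\<forall>u\<in>Uni ns n. \<forall>v\<in>Uni ns n. cj n e \<mu>0 (u * v) = cj n e \<mu>0 u * cj n e \<mu>0 v"
    using nondeg_hom[OF cj_nondeg[OF m eT]] .
  have rt: "\<forall>i a. Suc i < n \<and> blk ns i = blk ns (Suc i) \<longrightarrow> cj n e \<mu>0 (rootmat n i a) = \<nu> (rootmat n i a)"
  proof (intro allI impI)
    fix i a assume i: "Suc i < n \<and> blk ns i = blk ns (Suc i)"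
    hence Pi: "P i" by (simp add: P_def)
    have "cj n e \<mu>0 (rootmat n i a) = \<mu>0 (rootmat n i (dseq C i * a * inverse (dseq C (Suc i))))"
      unfolding cj_def conj_rootmat[OF eT conjunct1[OF i]] using i by (simp add: ediag)
    also have "dseq C i * a * inverse (dseq C (Suc i)) = C i * a"
      using dseq_nz[OF Cnz, of i] Cnz by (simp add: field_simps)
    also have "\<mu>0 (rootmat n i (C i * a)) = \<nu> (rootmat n i a)" using C[OF Pi] by simp
    finally show "cj n e \<mu>0 (rootmat n i a) = \<nu> (rootmat n i a)" .
  qed
  have one: "cj n e \<mu>0 (1\<^sub>m n) = \<nu> (1\<^sub>m n)"
    unfolding cj_def using nondeg_one[OF m] nondeg_one[OF v] Tor_carrier[OF eT] Tor_mult_dinv[OF eT] by simp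
  have "\<forall>u\<in>Uni ns n. cj n e \<mu>0 u = \<nu> u"
    using hom_agree[OF hom1 nondeg_hom[OF v] rt one] by blast
  then show ?thesis using eT unfolding cj_def by metis
qed

definition BS :: "nat list \<Rightarrow> nat \<Rightarrow> 'f::field mat set" where
  "BS ns n = {z \<in> Tor ns n. \<forall>i<n. \<forall>j<n. blk ns i = blk ns j \<longrightarrow> z $$ (i,i) = z $$ (j,j)}"

lemma stab_BS:
  fixes \<mu>0 :: "'f::field mat \<Rightarrow> 'w::idom"
  assumes m: "\<mu>0 \<in> nondeg_chars ns n" and z: "z \<in> Tor ns n"
    and st: "\<forall>v\<in>Uni ns n. \<mu>0 (z * v * dinv n z) = \<mu>0 v"
  shows "z \<in> BS ns n"
proof -
  have simple: "z $$ (i,i) = z $$ (Suc i, Suc i)" if i: "Suc i < n" "blk ns i = blk ns (Suc i)" for i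
  proof (rule ccontr)
    assume ne: "z $$ (i,i) \<noteq> z $$ (Suc i, Suc i)"
    let ?r = "z $$ (i,i) * inverse (z $$ (Suc i, Suc i))"
    have nz: "z $$ (Suc i, Suc i) \<noteq> 0" using Tor_diag_nz[OF z] i by auto
    have r1: "?r - 1 \<noteq> 0" using ne nz by (auto simp: field_simps)
    let ?\<psi> = "\<lambda>a. \<mu>0 (rootmat n i a)"
    have eqr: "?\<psi> (?r * a) = ?\<psi> a" for a
    proof -
      have "?\<psi> a = \<mu>0 (z * rootmat n i a * dinv n z)" by (rule sym[OF st[rule_format, OF rootmat_Uni[OF i]]])
      also have "\<dots> = ?\<psi> (?r * a)" unfolding conj_rootmat[OF z i(1)] by (simp add: ac_simps)
      finally show ?thesis by simp
    qed
    have triv: "?\<psi> ((?r - 1) * a) = 1" for a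
    proof -
      have "?\<psi> ((?r - 1) * a) * ?\<psi> a = ?\<psi> ((?r - 1) * a + a)"
        using nondeg_psi(1)[OF m i] by simp
      also have "(?r - 1) * a + a = ?r * a" by (simp add: algebra_simps)
      also have "?\<psi> (?r * a) = 1 * ?\<psi> a" using eqr by simp
      finally show ?thesis using nondeg_psi(3)[OF m i, of a] by simp
    qed
    obtain b where b: "?\<psi> b \<noteq> 1" using nondeg_root[OF m i] by blast
    have "?\<psi> b = ?\<psi> ((?r - 1) * (b / (?r - 1)))" using r1 by simp
    also have "\<dots> = 1" by (rule triv)
    finally show False using b by simp
  qed
  have chain: "\<forall>i. i + k < n \<and> blk ns i = blk ns (i + k) \<longrightarrow> z $$ (i,i) = z $$ (i + k, i + k)" for k
  proof (induction k)
    case 0 then show ?case by simp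
  next
    case (Suc k)
    show ?case
    proof (intro allI impI)
      fix i assume h: "i + Suc k < n \<and> blk ns i = blk ns (i + Suc k)"
      have b1: "blk ns (i + k) = blk ns i" using h blk_between[of i "i + k" "i + Suc k" ns] by simp
      have "z $$ (i,i) = z $$ (i + k, i + k)" using Suc.IH h b1 by simp
      also have "\<dots> = z $$ (Suc (i + k), Suc (i + k))" using simple[of "i + k"] h b1 by simp
      finally show "z $$ (i,i) = z $$ (i + Suc k, i + Suc k)" by simp
    qed
  qed
  have all: "\<forall>i<n. \<forall>j<n. blk ns i = blk ns j \<longrightarrow> z $$ (i,i) = z $$ (j,j)"
  proof (intro allI impI)
  fix i j assume that: "i < n" "j < n" "blk ns i = blk ns j"
  show "z $$ (i,i) = z $$ (j,j)"
  proof (cases "i \<le> j")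
    case True
    then obtain k where "j = i + k" using le_Suc_ex by blast
    then show ?thesis using chain[of k] that by simp
  next
    case False
    then obtain k where "i = j + k" using le_Suc_ex[of j i] by auto
    then show ?thesis using chain[of k] that by simp
  qed
  qed
  show ?thesis unfolding BS_def using z all by blast
qed

lemma BS_Tor: "z \<in> BS ns n \<Longrightarrow> z \<in> Tor ns n"
  by (simp add: BS_def)

lemma BS_comm:
  assumes z: "z \<in> BS ns n" and g: "g \<in> Levi ns n"
  shows "z * g = g * z"
proof -
  have zT: "z \<in> Tor ns n" using BS_Tor[OF z] .
  have cg: "g \<in> carrier_mat n n" using Levi_carrier[OF g] .
  show ?thesis
  proof (rule eq_matI)
    fix r c assume "r < dim_row (g * z)" "c < dim_col (g * z)"
    hence rc: "r < n" "c < n" using cg Tor_carrier[OF zT] by auto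
    have "(z * g) $$ (r,c) = z $$ (r,r) * g $$ (r,c)"
      by (subst Tor_dmat[OF zT], rule dmat_mult_index[OF cg rc])
    also have "\<dots> = g $$ (r,c) * z $$ (c,c)"
    proof (cases "blk ns r = blk ns c")
      case True
      have "z $$ (r,r) = z $$ (c,c)" using z rc True unfolding BS_def by blast
      then show ?thesis by simp
    next
      case False
      then show ?thesis using Levi_blk[OF g rc] by simp
    qed
    also have "\<dots> = (g * z) $$ (r,c)"
      by (subst (2) Tor_dmat[OF zT], rule mult_dmat_index[OF cg rc, symmetric])
    finally show "(z * g) $$ (r,c) = (g * z) $$ (r,c)" .
  qed (use cg Tor_carrier[OF zT] in auto)
qed

lemma BS_conj_Uni:
  assumes z: "z \<in> BS ns n" and u: "u \<in> Uni ns n"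
  shows "z * u * dinv n z = u"
proof -
  have zT: "z \<in> Tor ns n" using BS_Tor[OF z] .
  have "z * u * dinv n z = u * z * dinv n z" using BS_comm[OF z Uni_Levi[OF u]] by simp
  also have "\<dots> = u" using Uni_carrier[OF u] Tor_carrier[OF zT]
    by (simp add: massoc Tor_mult_dinv[OF zT])
  finally show ?thesis .
qed

lemma BS_mult: assumes z: "z \<in> BS ns n" and w: "w \<in> BS ns n" shows "z * w \<in> BS ns n"
proof -
  have T: "z * w \<in> Tor ns n" using Tor_mult[OF BS_Tor[OF z] BS_Tor[OF w]] .
  have "(z * w) $$ (i,i) = (z * w) $$ (j,j)" if "i < n" "j < n" "blk ns i = blk ns j" for i j
  proof -
    have "z $$ (i,i) = z $$ (j,j)" "w $$ (i,i) = w $$ (j,j)" using z w that unfolding BS_def by blast+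
    then show ?thesis unfolding Tor_mult_index[OF BS_Tor[OF z] BS_Tor[OF w] that(1)]
      Tor_mult_index[OF BS_Tor[OF z] BS_Tor[OF w] that(2)] by simp
  qed
  then show ?thesis using T unfolding BS_def by blast
qed

lemma dinv_BS: assumes z: "z \<in> BS ns n" shows "dinv n z \<in> BS ns n"
proof -
  have "dinv n z $$ (i,i) = dinv n z $$ (j,j)" if "i < n" "j < n" "blk ns i = blk ns j" for i j
  proof -
    have "z $$ (i,i) = z $$ (j,j)" using z that unfolding BS_def by blast
    then show ?thesis using that by (simp add: dinv_index)
  qed
  then show ?thesis using dinv_Tor[OF BS_Tor[OF z]] unfolding BS_def by blast
qed

lemma one_BS: "1\<^sub>m n \<in> BS ns n"
proof -
  have "1\<^sub>m n = dmat n (\<lambda>i. 1 :: 'a::field)" by (rule eq_matI) auto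
  hence "1\<^sub>m n \<in> (Tor ns n :: 'a mat set)" using dmat_Tor[of n "\<lambda>i. 1::'a" ns] by simp
  then show ?thesis by (auto simp: BS_def)
qed



lemma finite_carrier_sq: "finite (carrier_mat n n :: 'f::finite mat set)"
proof -
  define f :: "'f mat \<Rightarrow> 'f list list" where "f A = map (\<lambda>i. map (\<lambda>j. A $$ (i,j)) [0..<n]) [0..<n]" for A
  have inj: "inj_on f (carrier_mat n n)"
  proof (rule inj_onI)
    fix A B :: "'f mat" assume A: "A \<in> carrier_mat n n" and B: "B \<in> carrier_mat n n" and e: "f A = f B"
    show "A = B"
    proof (rule eq_matI)
      fix i j assume "i < dim_row B" "j < dim_col B"
      hence ij: "i < n" "j < n" using B by auto
      have "f A ! i ! j = f B ! i ! j" using e by simp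
      then show "A $$ (i,j) = B $$ (i,j)" using ij by (simp add: f_def)
    qed (use A B in auto)
  qed
  have "f ` carrier_mat n n \<subseteq> {xs. set xs \<subseteq> {ys. set ys \<subseteq> UNIV \<and> length ys = n} \<and> length xs = n}"
    by (auto simp: f_def)
  moreover have "finite {xs. set xs \<subseteq> {ys. set ys \<subseteq> (UNIV :: 'f set) \<and> length ys = n} \<and> length xs = n}"
    by (intro finite_lists_length_eq) simp
  ultimately have "finite (f ` carrier_mat n n)" by (rule finite_subset)
  then show ?thesis using finite_imageD[OF _ inj] by blast
qed

lemma finite_Levi: "finite (Levi ns n :: 'f::{finite,field} mat set)"
  by (rule finite_subset[OF _ finite_carrier_sq[of n]]) (auto simp: Levi_def)

lemma finite_BS: "finite (BS ns n :: 'f::{finite,field} mat set)"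
  by (rule finite_subset[OF _ finite_Levi[of ns n]]) (auto simp: BS_def Tor_def)

lemma comm_Xm_BS:
  assumes z: "z \<in> Levi ns n"
    and cm: "\<And>i j. i < n \<Longrightarrow> j < n \<Longrightarrow> i \<noteq> j \<Longrightarrow> blk ns i = blk ns j \<Longrightarrow> z * Xm n i j 1 = Xm n i j 1 * z"
  shows "z \<in> BS ns n"
proof -
  have cz: "z \<in> carrier_mat n n" using Levi_carrier[OF z] .
  have key: "z $$ (k,i) = (if k = i then z $$ (j,j) else 0)"
    if ij: "i < n" "j < n" "i \<noteq> j" "blk ns i = blk ns j" and k: "k < n" for i j k
  proof -
    have "(z * Xm n i j 1) $$ (k,j) = (Xm n i j 1 * z) $$ (k,j)" using cm[OF ij] by simp
    moreover have "(z * Xm n i j 1) $$ (k,j) = z $$ (k,j) + z $$ (k,i)"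
      using mult_Xm_sq[OF cz k ij(2) ij(3) ij(1), of 1] by simp
    moreover have "(Xm n i j 1 * z) $$ (k,j) = z $$ (k,j) + (if k = i then z $$ (j,j) else 0)"
      using Xm_mult_index[OF cz k ij(2) ij(3) ij(2), of 1] by simp
    ultimately show ?thesis by simp
  qed
  have off: "z $$ (r,c) = 0" if "r < n" "c < n" "r \<noteq> c" for r c
  proof (cases "blk ns r = blk ns c")
    case True
    then show ?thesis using key[of c r r] that by simp
  next
    case False
    then show ?thesis using Levi_blk[OF z that(1,2)] by simp
  qed
  have diag: "z $$ (i,i) = z $$ (j,j)" if "i < n" "j < n" "blk ns i = blk ns j" for i j
  proof (cases "i = j")
    case False then show ?thesis using key[of i j i] that by simp
  qed simp
  have "z \<in> Tor ns n" using z off by (auto simp: Tor_def)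
  then show ?thesis using diag unfolding BS_def by blast
qed

lemma centre_Levi: "centre (Levi ns n) = BS ns n"
proof
  show "centre (Levi ns n) \<subseteq> BS ns n"
  proof
    fix z assume "z \<in> centre (Levi ns n)"
    hence z: "z \<in> Levi ns n" and c: "\<forall>g\<in>Levi ns n. z * g = g * z" by (auto simp: centre_def)
    show "z \<in> BS ns n"
      by (rule comm_Xm_BS[OF z]) (use c Levi'_Levi[OF Xm_Levi'] in blast)
  qed
  show "BS ns n \<subseteq> centre (Levi ns n)"
    using BS_comm Tor_Levi[OF BS_Tor] by (auto simp: centre_def)
qed

lemma centre_Levi': "centre (Levi' ns n) = BS ns n \<inter> Levi' ns n"
proof
  show "centre (Levi' ns n) \<subseteq> BS ns n \<inter> Levi' ns n"
  proof
    fix z assume "z \<in> centre (Levi' ns n)"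
    hence z: "z \<in> Levi' ns n" and c: "\<forall>g\<in>Levi' ns n. z * g = g * z" by (auto simp: centre_def)
    have "z \<in> BS ns n"
      by (rule comm_Xm_BS[OF Levi'_Levi[OF z]]) (use c Xm_Levi' in blast)
    then show "z \<in> BS ns n \<inter> Levi' ns n" using z by simp
  qed
  show "BS ns n \<inter> Levi' ns n \<subseteq> centre (Levi' ns n)"
  proof
    fix z assume z: "z \<in> BS ns n \<inter> Levi' ns n"
    have "\<forall>g\<in>Levi' ns n. z * g = g * z" using BS_comm[of z ns n] z Levi'_Levi by blast
    then show "z \<in> centre (Levi' ns n)" using z by (simp add: centre_def)
  qed
qed

lemma BS_det_nz: "z \<in> BS ns n \<Longrightarrow> det z \<noteq> 0"
  using Levi_det[OF Tor_Levi[OF BS_Tor]] by blast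

lemma card_BS:
  "card (BS ns n :: 'f::{finite,field} mat set) = card (det ` (BS ns n :: 'f mat set)) * card (BS ns n \<inter> Levi' ns n :: 'f mat set)"
proof -
  let ?B = "BS ns n :: 'f mat set"
  let ?K = "BS ns n \<inter> Levi' ns n :: 'f mat set"
  define F where "F c = {z \<in> ?B. det z = c}" for c
  have K: "?K = F 1" using Tor_Levi[OF BS_Tor] by (auto simp: F_def Levi'_def)
  have U: "?B = \<Union>(F ` (det ` ?B))" by (auto simp: F_def)
  have fibre: "card (F c) = card ?K" if c: "c \<in> det ` ?B" for c
  proof -
    obtain z0 where z0: "z0 \<in> ?B" "det z0 = c" using c by auto
    have z0T: "z0 \<in> Tor ns n" using BS_Tor[OF z0(1)] .
    have "bij_betw (\<lambda>k. z0 * k) ?K (F c)"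
    proof (rule bij_betw_imageI)
      show "inj_on (\<lambda>k. z0 * k) ?K"
      proof (rule inj_onI)
        fix a b assume a: "a \<in> ?K" and b: "b \<in> ?K" and e: "z0 * a = z0 * b"
        have ca: "a \<in> carrier_mat n n" "b \<in> carrier_mat n n" using a b Levi'_Levi Levi_carrier by blast+
        have "a = dinv n z0 * (z0 * a)" using cancel2[OF z0T, of a] ca by auto
        also have "\<dots> = dinv n z0 * (z0 * b)" using e by simp
        also have "\<dots> = b" using cancel2[OF z0T, of b] ca by auto
        finally show "a = b" .
      qed
      show "(\<lambda>k. z0 * k) ` ?K = F c"
      proof
        show "(\<lambda>k. z0 * k) ` ?K \<subseteq> F c"
        proof
          fix x assume "x \<in> (\<lambda>k. z0 * k) ` ?K"
          then obtain k where k: "k \<in> ?K" "x = z0 * k" by auto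
          have ck: "k \<in> carrier_mat n n" using k Levi'_Levi Levi_carrier by blast
          have "det x = det z0 * det k" using k det_mult[of z0 n k] Tor_carrier[OF z0T] ck by auto
          also have "det k = 1" using k by (simp add: Levi'_def)
          finally show "x \<in> F c" using k BS_mult[OF z0(1)] z0 by (auto simp: F_def)
        qed
        show "F c \<subseteq> (\<lambda>k. z0 * k) ` ?K"
        proof
          fix x assume x: "x \<in> F c"
          hence xB: "x \<in> ?B" and dx: "det x = c" by (auto simp: F_def)
          let ?k = "dinv n z0 * x"
          have kB: "?k \<in> ?B" using BS_mult[OF dinv_BS[OF z0(1)] xB] .
          have "det ?k = det (dinv n z0) * det x"
            using det_mult[of "dinv n z0" n x] Tor_carrier[OF BS_Tor[OF xB]] by auto
          also have "\<dots> = det (dinv n z0) * det z0" using dx z0 by simp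
          also have "\<dots> = 1" using det_dinv[OF z0T] .
          finally have "?k \<in> Levi' ns n" using kB Tor_Levi[OF BS_Tor] by (auto simp: Levi'_def)
          moreover have "x = z0 * ?k" using cancel1[OF z0T, of x] Tor_carrier[OF BS_Tor[OF xB]] by auto
          ultimately show "x \<in> (\<lambda>k. z0 * k) ` ?K" using kB by blast
        qed
      qed
    qed
    then show ?thesis by (simp add: bij_betw_same_card)
  qed
  have "card ?B = (\<Sum>c\<in>det ` ?B. card (F c))"
    by (subst U, rule card_UN_disjoint) (auto simp: F_def intro: finite_subset[OF _ finite_BS])
  also have "\<dots> = (\<Sum>c\<in>det ` ?B. card ?K)" using fibre by simp
  also have "\<dots> = card (det ` ?B) * card ?K" by simp
  finally show ?thesis .
qed

lemma m_eq:
  "card (centre (Levi ns n :: 'f::{finite,field} mat set)) div card (centre (Levi' ns n :: 'f mat set))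
     = card (det ` (BS ns n :: 'f mat set))"
proof -
  have "1\<^sub>m n \<in> (BS ns n \<inter> Levi' ns n :: 'f mat set)" using one_BS one_Levi' by blast
  hence "card (BS ns n \<inter> Levi' ns n :: 'f mat set) > 0"
    using finite_BS by (auto simp: card_gt_0_iff)
  moreover have "card (BS ns n :: 'f mat set) = card (det ` (BS ns n :: 'f mat set)) * card (BS ns n \<inter> Levi' ns n :: 'f mat set)"
    by (rule card_BS)
  ultimately show ?thesis unfolding centre_Levi centre_Levi' by simp
qed



definition Eset :: "nat list \<Rightarrow> nat \<Rightarrow> ('f::field mat \<Rightarrow> 'w) \<Rightarrow> ('f mat \<Rightarrow> 'w) \<Rightarrow> 'f mat set" where
  "Eset ns n \<mu>0 \<nu> = {e \<in> Tor ns n. \<forall>u\<in>Uni ns n. \<nu> u = \<mu>0 (e * u * dinv n e)}"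

lemma dinv_dinv: assumes "e \<in> Tor ns n" shows "dinv n (dinv n e) = e"
proof -
  have "dinv n (dinv n e) = dmat n (\<lambda>i. e $$ (i,i))"
    unfolding dinv_def by (rule eq_matI) auto
  then show ?thesis using Tor_dmat[OF assms] by simp
qed

lemma Tor_inv_eq: assumes t: "t \<in> Tor ns n" and t': "t' \<in> Tor ns n" and e: "t' * t = 1\<^sub>m n"
  shows "t = dinv n t'"
proof -
  have "t = (dinv n t' * t') * t" using dinv_mult_Tor[OF t'] Tor_carrier[OF t] by simp
  also have "\<dots> = dinv n t' * (t' * t)" using Tor_carrier[OF t] Tor_carrier[OF t'] by (simp add: massoc)
  also have "\<dots> = dinv n t'" using e by simp
  finally show ?thesis .
qed

lemma Tor_det_nz: "e \<in> Tor ns n \<Longrightarrow> det e \<noteq> 0"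
  using Levi_det[OF Tor_Levi] by blast

lemma Tor_det_mult: "e \<in> Tor ns n \<Longrightarrow> f \<in> Tor ns n \<Longrightarrow> det (e * f) = det e * det f"
  using det_mult[of e n f] Tor_carrier by blast

lemma Eset_det:
  fixes \<mu>0 \<nu> :: "'f::field mat \<Rightarrow> 'w::idom"
  assumes m: "\<mu>0 \<in> nondeg_chars ns n" and e0: "e0 \<in> Eset ns n \<mu>0 \<nu>"
  shows "det ` Eset ns n \<mu>0 \<nu> = (\<lambda>c. c * det e0) ` (det ` BS ns n)"
proof
  have e0T: "e0 \<in> Tor ns n" and e0u: "\<forall>u\<in>Uni ns n. \<nu> u = \<mu>0 (e0 * u * dinv n e0)"
    using e0 by (auto simp: Eset_def)
  show "det ` Eset ns n \<mu>0 \<nu> \<subseteq> (\<lambda>c. c * det e0) ` (det ` BS ns n)"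
  proof
    fix x assume "x \<in> det ` Eset ns n \<mu>0 \<nu>"
    then obtain e where e: "e \<in> Eset ns n \<mu>0 \<nu>" and x: "x = det e" by auto
    have eT: "e \<in> Tor ns n" and eu: "\<forall>u\<in>Uni ns n. \<nu> u = \<mu>0 (e * u * dinv n e)"
      using e by (auto simp: Eset_def)
    define z where "z = e * dinv n e0"
    have zT: "z \<in> Tor ns n" unfolding z_def using Tor_mult[OF eT dinv_Tor[OF e0T]] .
    have st: "\<forall>v\<in>Uni ns n. \<mu>0 (z * v * dinv n z) = \<mu>0 v"
    proof
      fix v :: "'f mat" assume v: "v \<in> Uni ns n"
      define u where "u = dinv n e0 * v * dinv n (dinv n e0)"
      have uU: "u \<in> Uni ns n" unfolding u_def by (rule conj_Uni[OF dinv_Tor[OF e0T] v])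
      have u2: "u = dinv n e0 * v * e0" unfolding u_def dinv_dinv[OF e0T] ..
      have "z * v * dinv n z = e * (dinv n e0 * v * dinv n (dinv n e0)) * dinv n e"
        unfolding z_def by (rule conj_conj[OF eT dinv_Tor[OF e0T] Uni_carrier[OF v]])
      hence "\<mu>0 (z * v * dinv n z) = \<nu> u" using eu uU unfolding u_def by simp
      also have "\<dots> = \<mu>0 (e0 * u * dinv n e0)" using e0u uU by simp
      also have "e0 * u * dinv n e0 = v" unfolding u2 by (rule conj_inv(1)[OF e0T Uni_carrier[OF v]])
      finally show "\<mu>0 (z * v * dinv n z) = \<mu>0 v" .
    qed
    have zB: "z \<in> BS ns n" by (rule stab_BS[OF m zT st])
    have "z * e0 = e" unfolding z_def using Tor_carrier[OF eT] Tor_carrier[OF e0T]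
      by (simp add: massoc dinv_mult_Tor[OF e0T])
    hence "x = det z * det e0" using x Tor_det_mult[OF zT e0T] by simp
    then show "x \<in> (\<lambda>c. c * det e0) ` (det ` BS ns n)" using zB by blast
  qed
  show "(\<lambda>c. c * det e0) ` (det ` BS ns n) \<subseteq> det ` Eset ns n \<mu>0 \<nu>"
  proof
    fix x assume "x \<in> (\<lambda>c. c * det e0) ` (det ` BS ns n)"
    then obtain z where zB: "z \<in> BS ns n" and x: "x = det z * det e0" by auto
    have zT: "z \<in> Tor ns n" using BS_Tor[OF zB] .
    have "z * e0 \<in> Eset ns n \<mu>0 \<nu>"
      unfolding Eset_def mem_Collect_eq
    proof (intro conjI ballI)
      show "z * e0 \<in> Tor ns n" using Tor_mult[OF zT e0T] .
      fix u :: "'f mat" assume u: "u \<in> Uni ns n"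
      have "z * e0 * u * dinv n (z * e0) = z * (e0 * u * dinv n e0) * dinv n z"
        by (rule conj_conj[OF zT e0T Uni_carrier[OF u]])
      also have "\<dots> = e0 * u * dinv n e0" by (rule BS_conj_Uni[OF zB conj_Uni[OF e0T u]])
      finally show "\<nu> u = \<mu>0 (z * e0 * u * dinv n (z * e0))" using e0u u by simp
    qed
    moreover have "det (z * e0) = x" using x Tor_det_mult[OF zT e0T] by simp
    ultimately show "x \<in> det ` Eset ns n \<mu>0 \<nu>" by (metis image_eqI)
  qed
qed

lemma Eset_card:
  fixes \<mu>0 \<nu> :: "'f::{finite,field} mat \<Rightarrow> 'w::idom"
  assumes m: "\<mu>0 \<in> nondeg_chars ns n" and e0: "e0 \<in> Eset ns n \<mu>0 \<nu>"
  shows "card (det ` Eset ns n \<mu>0 \<nu>) = card (det ` (BS ns n :: 'f mat set))"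
proof -
  have e0T: "e0 \<in> Tor ns n" using e0 by (simp add: Eset_def)
  have "inj_on (\<lambda>c. c * det e0) (det ` BS ns n)"
    using Tor_det_nz[OF e0T] by (auto intro: inj_onI)
  then show ?thesis unfolding Eset_det[OF m e0] by (rule card_image)
qed

lemma Eset_disjoint:
  fixes \<mu>0 :: "'f::field mat \<Rightarrow> 'w::idom"
  assumes R: "orbit_reps ns n Reps" and v1: "\<nu>1 \<in> Reps" and v2: "\<nu>2 \<in> Reps"
    and e1: "e1 \<in> Eset ns n \<mu>0 \<nu>1" and e2: "e2 \<in> Eset ns n \<mu>0 \<nu>2" and d: "det e1 = det e2"
  shows "\<nu>1 = \<nu>2"
proof -
  have e1T: "e1 \<in> Tor ns n" and e1u: "\<forall>u\<in>Uni ns n. \<nu>1 u = \<mu>0 (e1 * u * dinv n e1)"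
    using e1 by (auto simp: Eset_def)
  have e2T: "e2 \<in> Tor ns n" and e2u: "\<forall>u\<in>Uni ns n. \<nu>2 u = \<mu>0 (e2 * u * dinv n e2)"
    using e2 by (auto simp: Eset_def)
  define t' where "t' = dinv n e1 * e2"
  have t'T: "t' \<in> Tor ns n" unfolding t'_def using Tor_mult[OF dinv_Tor[OF e1T] e2T] .
  have dt': "det t' = 1" unfolding t'_def using Tor_det_mult[OF dinv_Tor[OF e1T] e2T] d det_dinv[OF e1T] by simp
  have t'T': "t' \<in> Tor' ns n" using t'T dt' by (simp add: Tor'_def Levi'_def Tor_Levi)
  have dd: "dinv n t' = dinv n e2 * e1"
    unfolding t'_def dinv_mult[OF dinv_Tor[OF e1T] e2T] dinv_dinv[OF e1T] ..
  have tT': "dinv n t' \<in> Tor' ns n"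
    using dinv_Tor[OF t'T] det_dinv[OF t'T] dt' by (simp add: Tor'_def Levi'_def Tor_Levi)
  have so: "same_orbit ns n \<nu>1 \<nu>2"
    unfolding same_orbit_def
  proof (intro bexI conjI ballI)
    show "t' * dinv n t' = 1\<^sub>m n" by (rule Tor_mult_dinv[OF t'T])
    fix u :: "'f mat" assume u: "u \<in> Uni ns n"
    have uU: "t' * u * dinv n t' \<in> Uni ns n" by (rule conj_Uni[OF t'T u])
    have "e1 * (t' * u * dinv n t') * dinv n e1 = (e1 * t') * u * dinv n (e1 * t')"
      by (rule conj_conj[OF e1T t'T Uni_carrier[OF u], symmetric])
    also have "e1 * t' = e2" unfolding t'_def using Tor_carrier[OF e1T] Tor_carrier[OF e2T]
      by (simp add: massoc[symmetric] Tor_mult_dinv[OF e1T])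
    finally have "\<nu>1 (t' * u * dinv n t') = \<nu>2 u" using e1u e2u uU u by simp
    then show "\<nu>2 u = \<nu>1 (t' * u * dinv n t')" by simp
  qed (use t'T' tT' in auto)
  then show ?thesis using R v1 v2 unfolding orbit_reps_def by blast
qed

lemma Eset_cover:
  fixes \<mu>0 :: "'f::field mat \<Rightarrow> 'w::idom"
  assumes R: "orbit_reps ns n Reps" and m: "\<mu>0 \<in> nondeg_chars ns n" and e: "e \<in> Tor ns n"
  shows "\<exists>\<nu>\<in>Reps. \<exists>e'\<in>Eset ns n \<mu>0 \<nu>. det e' = det e"
proof -
  have "cj n e \<mu>0 \<in> nondeg_chars ns n" by (rule cj_nondeg[OF m e])
  then obtain \<nu> where v: "\<nu> \<in> Reps" and so: "same_orbit ns n (cj n e \<mu>0) \<nu>"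
    using R unfolding orbit_reps_def by blast
  then obtain t t' where t: "t \<in> Tor' ns n" and t': "t' \<in> Tor' ns n" and tt: "t' * t = 1\<^sub>m n"
    and tu: "\<forall>u\<in>Uni ns n. \<nu> u = cj n e \<mu>0 (t' * u * t)"
    unfolding same_orbit_def by blast
  have tT: "t \<in> Tor ns n" and t'T: "t' \<in> Tor ns n" using t t' by (auto simp: Tor'_def)
  have dt': "det t' = 1" using t' by (auto simp: Tor'_def Levi'_def)
  have tinv: "t = dinv n t'" by (rule Tor_inv_eq[OF tT t'T tt])
  have "e * t' \<in> Eset ns n \<mu>0 \<nu>"
    unfolding Eset_def mem_Collect_eq
  proof (intro conjI ballI)
    show "e * t' \<in> Tor ns n" using Tor_mult[OF e t'T] .
    fix u :: "'f mat" assume u: "u \<in> Uni ns n"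
    have "e * t' * u * dinv n (e * t') = e * (t' * u * t) * dinv n e"
      unfolding tinv by (rule conj_conj[OF e t'T Uni_carrier[OF u]])
    then show "\<nu> u = \<mu>0 (e * t' * u * dinv n (e * t'))" using tu u by (simp add: cj_def)
  qed
  moreover have "det (e * t') = det e" using Tor_det_mult[OF e t'T] dt' by simp
  ultimately show ?thesis using v by blast
qed

lemma Levi_det_Tor:
  assumes y: "y \<in> Levi ns n"
  shows "\<exists>e\<in>Tor ns n. det e = det y"
proof (cases "n = 0")
  case True
  have "y = 1\<^sub>m n" using Levi_carrier[OF y] True by (intro eq_matI) auto
  then show ?thesis using one_BS[of n ns] BS_Tor by (metis)
next
  case False
  define d where "d i = (if i = 0 then det y else 1)" for i :: nat
  have dT: "dmat n d \<in> Tor ns n" by (rule dmat_Tor) (use Levi_det[OF y] in \<open>auto simp: d_def\<close>)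
  have "det (dmat n d) = (\<Prod>i<n. d i)" by (rule det_dmat)
  also have "\<dots> = (\<Prod>i\<in>{0}. d i)"
    by (rule prod.mono_neutral_right) (use False in \<open>auto simp: d_def\<close>)
  also have "\<dots> = det y" by (simp add: d_def)
  finally show ?thesis using dT by blast
qed



definition sqpart :: "nat \<Rightarrow> 'a mat \<Rightarrow> 'a mat" where
  "sqpart n x = mat n n (\<lambda>(i,l). row x i $ l)"

definition widen :: "nat \<Rightarrow> 'a::zero mat \<Rightarrow> 'a mat" where
  "widen n A = mat n (Suc n) (\<lambda>(i,j). if j < n then A $$ (i,j) else 0)"

lemma sqpart_id: "x \<in> carrier_mat n n \<Longrightarrow> sqpart n x = x"
  unfolding sqpart_def by (rule eq_matI) auto

lemma sqpart_carrier: "sqpart n x \<in> carrier_mat n n"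
  by (simp add: sqpart_def)

lemma mult_sqpart:
  assumes "dim_row x = n" "s \<in> carrier_mat n n"
  shows "x * s = sqpart n x * (s :: 'a::semiring_0 mat)"
proof (rule eq_matI)
  fix i j assume ij: "i < dim_row (sqpart n x * s)" "j < dim_col (sqpart n x * s)"
  hence ij': "i < n" "j < n" using assms by (auto simp: sqpart_def)
  have "(x * s) $$ (i,j) = (\<Sum>l\<in>{0..<n}. row x i $ l * col s j $ l)"
    using assms ij' by (simp add: scalar_prod_def)
  also have "\<dots> = (sqpart n x * s) $$ (i,j)"
    using assms ij' by (simp add: scalar_prod_def sqpart_def)
  finally show "(x * s) $$ (i,j) = (sqpart n x * s) $$ (i,j)" .
qed (use assms in \<open>auto simp: sqpart_def\<close>)

lemma sqpart_widen: "A \<in> carrier_mat n n \<Longrightarrow> sqpart n (widen n A) = A"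
  unfolding sqpart_def widen_def by (rule eq_matI) auto

lemma widen_dims: "dim_row (widen n A) = n" "dim_col (widen n A) = Suc n"
  by (auto simp: widen_def)

lemma widen_notin: "widen n A \<notin> Levi ns n"
  using widen_dims[of n A] Levi_carrier by fastforce

lemma inv_exists:
  assumes A: "A \<in> carrier_mat n n" and d: "det A \<noteq> (0 :: 'a::field)"
  shows "\<exists>B\<in>carrier_mat n n. A * B = 1\<^sub>m n \<and> B * A = 1\<^sub>m n"
  using det_non_zero_imp_unit[OF A d, of undefined]
  unfolding Units_def ring_mat_def by auto

lemma Levi'_rinv:
  assumes s: "s \<in> (Levi' ns n :: 'f::{finite,field} mat set)"
  shows "\<exists>s'\<in>Levi' ns n. s * s' = 1\<^sub>m n"
proof -
  have cs: "s \<in> carrier_mat n n" using Levi_carrier[OF Levi'_Levi[OF s]] .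
  obtain B where B: "B \<in> carrier_mat n n" "s * B = 1\<^sub>m n" "B * s = 1\<^sub>m n"
    using inv_exists[OF cs Levi_det[OF Levi'_Levi[OF s]]] by blast
  let ?f = "\<lambda>h. h * s"
  have fin: "finite (Levi' ns n :: 'f mat set)"
    by (rule finite_subset[OF _ finite_Levi[of ns n]]) (auto simp: Levi'_def)
  have sub: "?f ` Levi' ns n \<subseteq> Levi' ns n" using Levi'_mult[OF _ s] by auto
  have inj: "inj_on ?f (Levi' ns n)"
  proof (rule inj_onI)
    fix h1 h2 assume h1: "h1 \<in> Levi' ns n" and h2: "h2 \<in> Levi' ns n" and e: "h1 * s = h2 * s"
    have c1: "h1 \<in> carrier_mat n n" and c2: "h2 \<in> carrier_mat n n"
      using h1 h2 Levi'_Levi Levi_carrier by blast+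
    have "h1 = h1 * s * B" using c1 cs B by (simp add: massoc)
    also have "\<dots> = h2 * s * B" using e by simp
    also have "\<dots> = h2" using c2 cs B by (simp add: massoc)
    finally show "h1 = h2" .
  qed
  have "?f ` Levi' ns n = Levi' ns n" by (rule endo_inj_surj[OF fin sub inj])
  moreover have "1\<^sub>m n \<in> Levi' ns n" by (rule one_Levi')
  ultimately obtain s' where s': "s' \<in> Levi' ns n" "s' * s = 1\<^sub>m n" by (metis imageE)
  have "s * s' = 1\<^sub>m n"
    by (rule mat_mult_left_right_inverse[OF _ cs s'(2)]) (use s' Levi'_Levi Levi_carrier in blast)
  then show ?thesis using s' by blast
qed

lemma Levi'_cancel:
  assumes x: "x \<in> carrier_mat n n" and s: "s \<in> (Levi' ns n :: 'f::{finite,field} mat set)"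
    and xs: "x * s \<in> Levi' ns n"
  shows "x \<in> Levi' ns n"
proof -
  obtain s' where s': "s' \<in> Levi' ns n" "s * s' = 1\<^sub>m n" using Levi'_rinv[OF s] by blast
  have cs: "s \<in> carrier_mat n n" "s' \<in> carrier_mat n n" using s s'(1) Levi'_Levi Levi_carrier by blast+
  have "x = x * s * s'" using x cs s'(2) by (simp add: massoc)
  then show ?thesis using Levi'_mult[OF xs s'(1)] by simp
qed



lemma Levi'_sq: assumes "x \<in> Levi' ns n" shows "dim_row x = n \<and> dim_col x = n \<and> sqpart n x = x"
proof -
  have c: "x \<in> carrier_mat n n" using Levi_carrier[OF Levi'_Levi[OF assms]] .
  show ?thesis using carrier_matD[OF c] sqpart_id[OF c] by (intro conjI)
qed

lemma sq_Levi': "dim_row x = n \<Longrightarrow> dim_col x = n \<Longrightarrow> sqpart n x \<in> Levi' ns n \<Longrightarrow> x \<in> Levi' ns n"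
proof -
  assume "dim_row x = n" "dim_col x = n" "sqpart n x \<in> Levi' ns n"
  moreover have "x \<in> carrier_mat n n" using calculation(1,2) by (rule carrier_matI)
  ultimately show ?thesis using sqpart_id[of x n] by simp
qed

theorem proposition3p9:
  fixes ns :: "nat list" and n l :: nat
    and \<mu>0 :: "'f::{finite,field} mat \<Rightarrow> 'w::idom"
    and Reps :: "('f mat \<Rightarrow> 'w) set"
  assumes "0 \<notin> set ns" and "sum_list ns = n"
    and "witt_alg_closed l TYPE('w)" and "\<not> l dvd card (UNIV :: 'f set)"
    and "\<mu>0 \<in> nondeg_chars ns n"
    and "orbit_reps ns n Reps"
  shows "\<exists>\<Phi>. gmod_iso (Levi' ns n) (ind_mod (Levi ns n) (Uni ns n) \<mu>0)
            (dsum_mod ns n (card (centre (Levi ns n :: 'f mat set)) div card (centre (Levi' ns n :: 'f mat set))) Reps)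
            \<Phi>"
proof -
  note m0 = assms(5) and R = assms(6)
  define m where "m = card (centre (Levi ns n :: 'f mat set)) div card (centre (Levi' ns n :: 'f mat set))"
  have mBS: "m = card (det ` (BS ns n :: 'f mat set))" unfolding m_def by (rule m_eq)
  have q: "(of_nat (card (UNIV :: 'f set)) :: 'w) \<noteq> 0" by (rule card_nonzero_W[OF assms(3) assms(4)])
  have RN: "\<nu> \<in> nondeg_chars ns n" if "\<nu> \<in> Reps" for \<nu> using R that unfolding orbit_reps_def by blast
  define E where "E \<nu> = Eset ns n \<mu>0 \<nu>" for \<nu>
  have Ene: "\<exists>e. e \<in> E \<nu>" if v: "\<nu> \<in> Reps" for \<nu>
    using transitive[OF m0 RN[OF v] q] unfolding E_def Eset_def by blast
  have Efin: "finite (det ` E \<nu>)" for \<nu>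
  proof -
    have "E \<nu> \<subseteq> Levi ns n" unfolding E_def Eset_def using Tor_Levi by blast
    then show ?thesis using finite_subset[OF _ finite_Levi] by blast
  qed
  have Ecard: "card (det ` E \<nu>) = m" if v: "\<nu> \<in> Reps" for \<nu>
  proof -
    obtain e0 where "e0 \<in> E \<nu>" using Ene[OF v] by blast
    then show ?thesis unfolding mBS E_def by (rule Eset_card[OF m0])
  qed
  have bex: "\<exists>h. bij_betw h {0..<m} (det ` E \<nu>)" if v: "\<nu> \<in> Reps" for \<nu>
    using ex_bij_betw_nat_finite[OF Efin[of \<nu>]] Ecard[OF v] by simp
  define b where "b \<nu> = (SOME h. bij_betw h {0..<m} (det ` E \<nu>))" for \<nu>
  have bb: "bij_betw (b \<nu>) {0..<m} (det ` E \<nu>)" if v: "\<nu> \<in> Reps" for \<nu>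
    unfolding b_def by (rule someI_ex[OF bex[OF v]])
  define V where "V = {0..<m} \<times> Reps"
  have idex: "\<exists>e. e \<in> E (snd k) \<and> det e = b (snd k) (fst k)" if k: "k \<in> V" for k
  proof -
    have "b (snd k) (fst k) \<in> det ` E (snd k)"
      using bij_betwE[OF bb] k unfolding V_def by (cases k) auto
    then show ?thesis by auto
  qed
  define idx where "idx k = (SOME e. e \<in> E (snd k) \<and> det e = b (snd k) (fst k))" for k
  have idx: "idx k \<in> E (snd k) \<and> det (idx k) = b (snd k) (fst k)" if k: "k \<in> V" for k
    unfolding idx_def by (rule someI_ex[OF idex[OF k]])
  have idxT: "idx k \<in> Tor ns n" if k: "k \<in> V" for k
    using idx[OF k] unfolding E_def Eset_def by blast
  have idxU: "\<forall>u\<in>Uni ns n. snd k u = \<mu>0 (idx k * u * dinv n (idx k))" if k: "k \<in> V" for k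
    using idx[OF k] unfolding E_def Eset_def by blast
  have inj: "k = k'" if k: "k \<in> V" and k': "k' \<in> V" and d: "det (idx k) = det (idx k')" for k k'
  proof -
    have v: "snd k \<in> Reps" "snd k' \<in> Reps" using k k' unfolding V_def by auto
    have "snd k = snd k'"
      by (rule Eset_disjoint[OF R v, of "idx k" \<mu>0 "idx k'"]) (use idx[OF k] idx[OF k'] d in \<open>auto simp: E_def\<close>)
    moreover have "fst k = fst k'"
    proof -
      have "b (snd k) (fst k) = b (snd k) (fst k')" using idx[OF k] idx[OF k'] d \<open>snd k = snd k'\<close> by simp
      moreover have "fst k \<in> {0..<m}" "fst k' \<in> {0..<m}" using k k' unfolding V_def by auto
      ultimately show ?thesis using bij_betw_imp_inj_on[OF bb[OF v(1)]] by (auto dest: inj_onD)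
    qed
    ultimately show ?thesis by (simp add: prod_eq_iff)
  qed
  have cover: "\<exists>k\<in>V. det (idx k) = det y" if y: "y \<in> Levi ns n" for y
  proof -
    obtain e where e: "e \<in> Tor ns n" "det e = det y" using Levi_det_Tor[OF y] by blast
    obtain \<nu> e' where v: "\<nu> \<in> Reps" and e': "e' \<in> E \<nu>" "det e' = det e"
      using Eset_cover[OF R m0 e(1)] unfolding E_def by blast
    have "det e' \<in> det ` E \<nu>" using e'(1) by blast
    hence "det e' \<in> b \<nu> ` {0..<m}" using bij_betw_imp_surj_on[OF bb[OF v]] by simp
    then obtain j where j: "j < m" "b \<nu> j = det e'" by auto
    have kV: "(j,\<nu>) \<in> V" using j v unfolding V_def by auto
    have "det (idx (j,\<nu>)) = det y" using idx[OF kV] j e e' by simp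
    then show ?thesis using kV by blast
  qed
  define kof where "kof y = (SOME k. k \<in> V \<and> det (idx k) = det y)" for y
  have kof: "kof y \<in> V \<and> det (idx (kof y)) = det y" if y: "y \<in> Levi ns n" for y
    unfolding kof_def using someI_ex[of "\<lambda>k. k \<in> V \<and> det (idx k) = det y"] cover[OF y] by blast
  have kof_eq: "kof y = k" if k: "k \<in> V" and y: "y \<in> Levi ns n" and d: "det y = det (idx k)" for y k
    using inj[OF conjunct1[OF kof[OF y]] k] kof[OF y] d by simp
  define \<Phi> where "\<Phi> g = (\<lambda>k x. if k \<in> V then (if dim_row x = n \<and> sqpart n x \<in> Levi' ns n
       then g (if dim_col x = n then idx k * x else widen n (idx k * sqpart n x)) else 0) else 0)"
    for g :: "'f mat \<Rightarrow> 'w"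
  have \<Phi>G': "\<Phi> g k x = g (idx k * x)" if "k \<in> V" "x \<in> Levi' ns n" for g k x
    using that Levi'_sq[OF that(2)] unfolding \<Phi>_def by simp
  have \<Phi>out: "\<Phi> f k x = 0" if f: "f \<in> ind_mod (Levi ns n) (Uni ns n) \<mu>0" and x: "x \<notin> Levi' ns n" for f k x
  proof -
    have "f (widen n A) = 0" for A using f widen_notin unfolding ind_mod_def by blast
    moreover have "\<not> (dim_row x = n \<and> sqpart n x \<in> Levi' ns n \<and> dim_col x = n)"
      using sq_Levi' x by blast
    ultimately show ?thesis unfolding \<Phi>_def by auto
  qed
  have \<Phi>V: "\<Phi> g k = (\<lambda>_. 0)" if "k \<notin> V" for g k
    using that unfolding \<Phi>_def by auto
  let ?M = "ind_mod (Levi ns n) (Uni ns n) \<mu>0"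
  let ?N = "dsum_mod ns n m Reps"
  have fM: "f (u * h) = \<mu>0 u * f h" if "f \<in> ?M" "h \<in> Levi ns n" "u \<in> Uni ns n" for f h u
    using that unfolding ind_mod_def by blast
  have fM0: "f x = 0" if "f \<in> ?M" "x \<notin> Levi ns n" for f x
    using that unfolding ind_mod_def by blast
  have VI: "(j,\<nu>) \<in> V \<longleftrightarrow> j < m \<and> \<nu> \<in> Reps" for j \<nu> unfolding V_def by auto
  have \<Phi>N: "\<Phi> f \<in> ?N" if f: "f \<in> ?M" for f
    unfolding dsum_mod_def mem_Collect_eq
  proof (intro conjI allI impI)
    fix j \<nu> assume jv: "j < m \<and> \<nu> \<in> Reps"
    hence k: "(j,\<nu>) \<in> V" by (simp add: VI)
    let ?e = "idx (j,\<nu>)"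
    have eT: "?e \<in> Tor ns n" using idxT[OF k] .
    show "\<Phi> f (j,\<nu>) \<in> ind_mod (Levi' ns n) (Uni ns n) \<nu>"
      unfolding ind_mod_def mem_Collect_eq
    proof (intro conjI ballI allI impI)
      fix h u :: "'f mat" assume h: "h \<in> Levi' ns n" and u: "u \<in> Uni ns n"
      have uh: "u * h \<in> Levi' ns n" using Levi'_mult[OF Uni_Levi'[OF u] h] .
      have ch: "h \<in> carrier_mat n n" using Levi_carrier[OF Levi'_Levi[OF h]] .
      have cu: "u \<in> carrier_mat n n" using Uni_carrier[OF u] .
      have ce: "?e \<in> carrier_mat n n" using Tor_carrier[OF eT] .
      have eq: "?e * (u * h) = (?e * u * dinv n ?e) * (?e * h)"
        using ch cu ce by (simp add: massoc cancel2[OF eT])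
      have eh: "?e * h \<in> Levi ns n" using Levi_mult[OF Tor_Levi[OF eT] Levi'_Levi[OF h]] .
      have "\<Phi> f (j,\<nu>) (u * h) = f (?e * (u * h))" using \<Phi>G'[OF k uh] .
      also have "\<dots> = \<mu>0 (?e * u * dinv n ?e) * f (?e * h)"
        unfolding eq by (rule fM[OF f eh conj_Uni[OF eT u]])
      also have "\<mu>0 (?e * u * dinv n ?e) = \<nu> u" using idxU[OF k] u by simp
      also have "f (?e * h) = \<Phi> f (j,\<nu>) h" using \<Phi>G'[OF k h] by simp
      finally show "\<Phi> f (j,\<nu>) (u * h) = \<nu> u * \<Phi> f (j,\<nu>) h" .
    next
      fix x :: "'f mat" assume "x \<notin> Levi' ns n"
      then show "\<Phi> f (j,\<nu>) x = 0" by (rule \<Phi>out[OF f])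
    qed
  next
    fix j \<nu> assume "\<not> (j < m \<and> \<nu> \<in> Reps)"
    hence "(j,\<nu>) \<notin> V" by (simp add: VI)
    then show "\<Phi> f (j,\<nu>) = (\<lambda>_. 0)" by (rule \<Phi>V)
  qed
  have \<Phi>inj: "inj_on \<Phi> ?M"
  proof (rule inj_onI)
    fix f g assume f: "f \<in> ?M" and g: "g \<in> ?M" and e: "\<Phi> f = \<Phi> g"
    show "f = g"
    proof
      fix y :: "'f mat" show "f y = g y"
      proof (cases "y \<in> Levi ns n")
        case True
        let ?k = "kof y"
        have k: "?k \<in> V" and dk: "det (idx ?k) = det y" using kof[OF True] by auto
        let ?e = "idx ?k"
        have eT: "?e \<in> Tor ns n" using idxT[OF k] .
        let ?h = "dinv n ?e * y"
        have cy: "y \<in> carrier_mat n n" using Levi_carrier[OF True] .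
        have hL: "?h \<in> Levi ns n" using Levi_mult[OF Tor_Levi[OF dinv_Tor[OF eT]] True] .
        have "det ?h = det (dinv n ?e) * det y" using det_mult[of "dinv n ?e" n y] cy by simp
        also have "\<dots> = 1" using dk det_dinv[OF eT] by simp
        finally have h: "?h \<in> Levi' ns n" using hL by (simp add: Levi'_def)
        have ey: "?e * ?h = y" using cancel1[OF eT] cy by simp
        have "f y = \<Phi> f ?k ?h" using \<Phi>G'[OF k h] ey by simp
        also have "\<dots> = \<Phi> g ?k ?h" using e by simp
        also have "\<dots> = g y" using \<Phi>G'[OF k h] ey by simp
        finally show ?thesis .
      next
        case False
        then show ?thesis using fM0[OF f] fM0[OF g] by simp
      qed
    qed
  qed
  have \<Phi>surj: "F \<in> \<Phi> ` ?M" if F: "F \<in> ?N" for F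
  proof -
    have FV: "F k \<in> ind_mod (Levi' ns n) (Uni ns n) (snd k)" if k: "k \<in> V" for k
      using F k unfolding dsum_mod_def V_def by (cases k) auto
    have FnV: "F k = (\<lambda>_. 0)" if k: "k \<notin> V" for k
      using F k unfolding dsum_mod_def V_def by (cases k) auto
    define f where "f y = (if y \<in> Levi ns n then F (kof y) (dinv n (idx (kof y)) * y) else 0)" for y
    have dL': "dinv n (idx (kof y)) * y \<in> Levi' ns n" if y: "y \<in> Levi ns n" for y
    proof -
      have k: "kof y \<in> V" and dk: "det (idx (kof y)) = det y" using kof[OF y] by auto
      have eT: "idx (kof y) \<in> Tor ns n" using idxT[OF k] .
      have cy: "y \<in> carrier_mat n n" using Levi_carrier[OF y] .
      have hL: "dinv n (idx (kof y)) * y \<in> Levi ns n" using Levi_mult[OF Tor_Levi[OF dinv_Tor[OF eT]] y] .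
      have "det (dinv n (idx (kof y)) * y) = det (dinv n (idx (kof y))) * det y"
        using det_mult[of "dinv n (idx (kof y))" n y] cy by simp
      also have "\<dots> = 1" using dk det_dinv[OF eT] by simp
      finally show ?thesis using hL by (simp add: Levi'_def)
    qed
    have fMem: "f \<in> ?M"
      unfolding ind_mod_def mem_Collect_eq
    proof (intro conjI ballI allI impI)
      fix h u :: "'f mat" assume h: "h \<in> Levi ns n" and u: "u \<in> Uni ns n"
      have uh: "u * h \<in> Levi ns n" using Levi_mult[OF Uni_Levi[OF u] h] .
      have ch: "h \<in> carrier_mat n n" using Levi_carrier[OF h] .
      have cu: "u \<in> carrier_mat n n" using Uni_carrier[OF u] .
      have duh: "det (u * h) = det h" using det_mult[OF cu ch] Uni_det[OF u] by simp
      have kk: "kof (u * h) = kof h" unfolding kof_def duh ..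
      let ?k = "kof h"
      have k: "?k \<in> V" using kof[OF h] by simp
      let ?e = "idx ?k"
      have eT: "?e \<in> Tor ns n" using idxT[OF k] .
      have ce: "?e \<in> carrier_mat n n" using Tor_carrier[OF eT] .
      have vU: "dinv n ?e * u * ?e \<in> Uni ns n"
        using conj_Uni[OF dinv_Tor[OF eT] u] unfolding dinv_dinv[OF eT] .
      have eq: "dinv n ?e * (u * h) = (dinv n ?e * u * ?e) * (dinv n ?e * h)"
        using ch cu ce by (simp add: massoc cancel1[OF eT])
      have "f (u * h) = F ?k (dinv n ?e * (u * h))" unfolding f_def using uh kk by simp
      also have "\<dots> = snd ?k (dinv n ?e * u * ?e) * F ?k (dinv n ?e * h)"
        unfolding eq using FV[OF k] vU dL'[OF h] unfolding ind_mod_def by blast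
      also have "snd ?k (dinv n ?e * u * ?e) = \<mu>0 (?e * (dinv n ?e * u * ?e) * dinv n ?e)"
        using idxU[OF k] vU by blast
      also have "?e * (dinv n ?e * u * ?e) * dinv n ?e = u" by (rule conj_inv(1)[OF eT cu])
      also have "F ?k (dinv n ?e * h) = f h" unfolding f_def using h by simp
      finally show "f (u * h) = \<mu>0 u * f h" .
    next
      fix x :: "'f mat" assume "x \<notin> Levi ns n"
      then show "f x = 0" unfolding f_def by simp
    qed
    have "\<Phi> f = F"
    proof (intro ext)
      fix k x
      show "\<Phi> f k x = F k x"
      proof (cases "k \<in> V")
        case False
        then show ?thesis using \<Phi>V[OF False] FnV[OF False] by simp
      next
        case k: True
        let ?e = "idx k"
        have eT: "?e \<in> Tor ns n" using idxT[OF k] .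
        show ?thesis
        proof (cases "x \<in> Levi' ns n")
          case True
          have cx: "x \<in> carrier_mat n n" using Levi_carrier[OF Levi'_Levi[OF True]] .
          have exL: "?e * x \<in> Levi ns n" using Levi_mult[OF Tor_Levi[OF eT] Levi'_Levi[OF True]] .
          have "det (?e * x) = det ?e * det x" using det_mult[of ?e n x] Tor_carrier[OF eT] cx by simp
          also have "det x = 1" using True by (simp add: Levi'_def)
          finally have "kof (?e * x) = k" using kof_eq[OF k exL] by simp
          then have "f (?e * x) = F k (dinv n ?e * (?e * x))" unfolding f_def using exL by simp
          also have "dinv n ?e * (?e * x) = x" using cancel2[OF eT] cx by simp
          finally show ?thesis using \<Phi>G'[OF k True] by simp
        next
          case False
          have "F k x = 0" using FV[OF k] False unfolding ind_mod_def by blast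
          moreover have "\<Phi> f k x = 0" by (rule \<Phi>out[OF fMem False])
          ultimately show ?thesis by simp
        qed
      qed
    qed
    then show ?thesis using fMem by blast
  qed
  have bij: "bij_betw \<Phi> ?M ?N"
    unfolding bij_betw_def using \<Phi>inj \<Phi>N \<Phi>surj by blast
  have lin: "\<forall>a. \<forall>f\<in>?M. \<forall>g\<in>?M. \<Phi> (\<lambda>x. a * f x + g x) = (\<lambda>i x. a * \<Phi> f i x + \<Phi> g i x)"
    unfolding \<Phi>_def by (intro allI ballI ext) auto
  have equi: "\<forall>s\<in>Levi' ns n. \<forall>f\<in>?M. \<Phi> (ract s f) = (\<lambda>i. ract s (\<Phi> f i))"
  proof (intro ballI ext)
    fix s :: "'f mat" and f k x assume s: "s \<in> Levi' ns n" and f: "f \<in> ?M"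
    have cs: "s \<in> carrier_mat n n" using Levi_carrier[OF Levi'_Levi[OF s]] .
    show "\<Phi> (ract s f) k x = ract s (\<Phi> f k) x"
    proof (cases "k \<in> V")
      case False
      then show ?thesis using \<Phi>V[OF False] by (simp add: ract_def)
    next
      case k: True
      let ?e = "idx k"
      have eT: "?e \<in> Tor ns n" using idxT[OF k] .
      have ce: "?e \<in> carrier_mat n n" using Tor_carrier[OF eT] .
      have R: "ract s (\<Phi> f k) x = \<Phi> f k (x * s)" by (simp add: ract_def)
      show ?thesis
      proof (cases "dim_row x = n")
        case False
        then show ?thesis unfolding R using k by (simp add: \<Phi>_def ract_def)
      next
        case True
        have xs: "x * s = sqpart n x * s" by (rule mult_sqpart[OF True cs])
        have cP: "sqpart n x \<in> carrier_mat n n" by (rule sqpart_carrier)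
        have Pxs: "sqpart n (x * s) = sqpart n x * s" unfolding xs using cP cs by (simp add: sqpart_id)
        show ?thesis
        proof (cases "sqpart n x \<in> Levi' ns n")
          case P: True
          have Ps: "sqpart n x * s \<in> Levi' ns n" using Levi'_mult[OF P s] .
          have rhs: "\<Phi> f k (x * s) = f (?e * (sqpart n x * s))"
            unfolding \<Phi>_def using k True Ps Pxs cs carrier_matD[OF cP] by (simp add: xs)
          have lhs: "\<Phi> (ract s f) k x = f (?e * (sqpart n x * s))"
          proof (cases "dim_col x = n")
            case True2: True
            have cx: "x \<in> carrier_mat n n" by (rule carrier_matI[OF True True2])
            have "x = sqpart n x" using sqpart_id[OF cx] by simp
            hence "\<Phi> (ract s f) k x = f (?e * x * s)" unfolding \<Phi>_def using k True True2 P by (simp add: ract_def)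
            also have "?e * x * s = ?e * (x * s)" using ce cx cs by (simp add: massoc)
            also have "x * s = sqpart n x * s" using \<open>x = sqpart n x\<close> by simp
            finally show ?thesis .
          next
            case False2: False
            have "\<Phi> (ract s f) k x = f (widen n (?e * sqpart n x) * s)"
              unfolding \<Phi>_def using k True False2 P by (simp add: ract_def)
            also have "widen n (?e * sqpart n x) * s = sqpart n (widen n (?e * sqpart n x)) * s"
              by (rule mult_sqpart[OF widen_dims(1) cs])
            also have "sqpart n (widen n (?e * sqpart n x)) = ?e * sqpart n x"
              by (rule sqpart_widen) (use ce cP in simp)
            also have "?e * sqpart n x * s = ?e * (sqpart n x * s)" using ce cP cs by (simp add: massoc)
            finally show ?thesis .
          qed
          show ?thesis unfolding R lhs rhs ..
        next
          case P: False
          have "sqpart n x * s \<notin> Levi' ns n" using Levi'_cancel[OF cP s] P by blast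
          hence "\<Phi> f k (x * s) = 0" unfolding \<Phi>_def using Pxs by simp
          moreover have "\<Phi> (ract s f) k x = 0" unfolding \<Phi>_def using P by simp
          ultimately show ?thesis unfolding R by simp
        qed
      qed
    qed
  qed
  have "gmod_iso (Levi' ns n) ?M ?N \<Phi>"
    unfolding gmod_iso_def using bij lin equi by blast
  then show ?thesis unfolding m_def by blast
qed

end
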